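(* Let $k$ be an algebraically closed field, $R$ a finitely generated commutative $k$-algebra, $M$ a Noetherian $R$-module, $x=(x_1,\ldots,x_n)$ an $n$-tuple in $R$, and $q=(q_1,\ldots,q_m)$ an $m$-tuple of polynomials in $k[X_1,\ldots,X_n]$, with $q(x)=(q_1(x),\ldots,q_m(x))$ and $q:k^n\to k^m$, $a\mapsto(q_1(a),\ldots,q_m(a))$. Then \[\sigma(q(x),M)=q(\sigma(x,M)).\]
   Context: For a commutative $k$-algebra $R$, an $R$-module $M$ and an $n$-tuple $y$ in $R$, the Koszul complex $\operatorname{Kos}(y,M)$ is $0\leftarrow M\leftarrow M\otimes_k\wedge^1k^n\leftarrow\cdots\leftarrow M\otimes_k\wedge^nk^n\leftarrow 0$ with differential $\partial(u\otimes e_{i_1}\wedge\cdots\wedge e_{i_p})=\sum_{s=1}^p(-1)^{s+1}y_{i_s}u\otimes e_{i_1}\wedge\cdots\wedge\widehat{e_{i_s}}\wedge\cdots\wedge e_{i_p}$. For $a\in k^n$, $y-a=(y_1-a_1,\ldots,y_n-a_n)$. The Taylor spectrum $\sigma(y,M)$ is the set of $a\in k^n$ such that $\operatorname{Kos}(y-a,M)$ is not exact. *)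

theory Defs
  imports "HOL-Computational_Algebra.Polynomial" "HOL-Library.Poly_Mapping"
begin

definition alg_map :: "('k::field \<Rightarrow> 'r::comm_ring_1) \<Rightarrow> bool" where
  "alg_map \<phi> \<longleftrightarrow> \<phi> 1 = 1 \<and> (\<forall>a b. \<phi> (a + b) = \<phi> a + \<phi> b) \<and> (\<forall>a b. \<phi> (a * b) = \<phi> a * \<phi> b)"

inductive_set subalg_gen :: "('k \<Rightarrow> 'r::comm_ring_1) \<Rightarrow> 'r set \<Rightarrow> 'r set"
  for \<phi> S where
  const: "\<phi> c \<in> subalg_gen \<phi> S"
| gen: "s \<in> S \<Longrightarrow> s \<in> subalg_gen \<phi> S"
| add: "a \<in> subalg_gen \<phi> S \<Longrightarrow> b \<in> subalg_gen \<phi> S \<Longrightarrow> a + b \<in> subalg_gen \<phi> S"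
| mult: "a \<in> subalg_gen \<phi> S \<Longrightarrow> b \<in> subalg_gen \<phi> S \<Longrightarrow> a * b \<in> subalg_gen \<phi> S"

definition fin_gen_algebra :: "('k \<Rightarrow> 'r::comm_ring_1) \<Rightarrow> bool" where
  "fin_gen_algebra \<phi> \<longleftrightarrow> (\<exists>S. finite S \<and> subalg_gen \<phi> S = UNIV)"

definition noetherian_module :: "('r::comm_ring_1 \<Rightarrow> 'm::ab_group_add \<Rightarrow> 'm) \<Rightarrow> bool" where
  "noetherian_module smul \<longleftrightarrow>
     (\<forall>N. module.subspace smul N \<longrightarrow> (\<exists>F. finite F \<and> F \<subseteq> N \<and> module.span smul F = N))"

(* polynomials in k[X_0, X_1, ...]: monomials are exponent vectors nat =>0 nat *)
type_synonym 'k mpoly = "(nat \<Rightarrow>\<^sub>0 nat) \<Rightarrow>\<^sub>0 'k"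

definition mpoly_vars :: "'k::zero mpoly \<Rightarrow> nat set" where
  "mpoly_vars p = \<Union> (Poly_Mapping.keys ` Poly_Mapping.keys p)"

(* evaluation of p at the tuple x (variable X_i |-> x ! i), coefficients mapped by phi *)
definition mpoly_eval :: "('k::zero \<Rightarrow> 'r::comm_ring_1) \<Rightarrow> 'r list \<Rightarrow> 'k mpoly \<Rightarrow> 'r" where
  "mpoly_eval \<phi> x p = (\<Sum>mon\<in>Poly_Mapping.keys p. \<phi> (Poly_Mapping.lookup p mon) * (\<Prod>i\<in>Poly_Mapping.keys mon. (x ! i) ^ Poly_Mapping.lookup mon i))"

(* Koszul complex Kos(y,M), n = length y.  M \<otimes> \<wedge>^p k^n is identified with functions
   from the p-element subsets I of {0..<n} to M (coefficient of e_I), extended by 0. *)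
definition kos_chains :: "nat \<Rightarrow> nat \<Rightarrow> (nat set \<Rightarrow> 'm::zero) set" where
  "kos_chains n p = {c. \<forall>I. \<not> (I \<subseteq> {..<n} \<and> card I = p) \<longrightarrow> c I = 0}"

(* d(u e_{i_1}\<and>...\<and>e_{i_p}) = \<Sum>_s (-1)^(s+1) y_{i_s} u e_I\{i_s}; the coefficient at J
   collects the terms from I = J \<union> {i}, i \<notin> J, with s - 1 = #{j\<in>J. j < i}. *)
definition kos_d :: "('r::comm_ring_1 \<Rightarrow> 'm::ab_group_add \<Rightarrow> 'm) \<Rightarrow> 'r list \<Rightarrow>
    (nat set \<Rightarrow> 'm) \<Rightarrow> (nat set \<Rightarrow> 'm)" where
  "kos_d smul y c J =
     (if J \<subseteq> {..<length y} then
        (\<Sum>i\<in>{..<length y} - J. smul ((-1) ^ card {j\<in>J. j < i} * y ! i) (c (insert i J)))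
      else 0)"

(* exactness at every degree p = 0..n (the differential out of degree 0 is the zero map,
   and kos_d vanishes on 0-chains, so the uniform condition is correct at p = 0;
   kos_chains n (n+1) = {0}, which gives injectivity at degree n) *)
definition kos_exact :: "('r::comm_ring_1 \<Rightarrow> 'm::ab_group_add \<Rightarrow> 'm) \<Rightarrow> 'r list \<Rightarrow> bool" where
  "kos_exact smul y \<longleftrightarrow>
     (\<forall>p\<le>length y. \<forall>c\<in>kos_chains (length y) p. kos_d smul y c = (\<lambda>_. 0) \<longrightarrow>
        (\<exists>e\<in>kos_chains (length y) (Suc p). kos_d smul y e = c))"

definition taylor_spectrum :: "('k \<Rightarrow> 'r::comm_ring_1) \<Rightarrow> ('r \<Rightarrow> 'm::ab_group_add \<Rightarrow> 'm) \<Rightarrow>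
    'r list \<Rightarrow> 'k list set" where
  "taylor_spectrum \<phi> smul y =
     {a. length a = length y \<and> \<not> kos_exact smul (map2 (\<lambda>yi ai. yi - \<phi> ai) y a)}"

end

theory Submission
  imports Defs "HOL-Algebra.Finite_Extensions" "HOL-Algebra.QuotRing" "HOL-Algebra.Generated_Fields"
begin

inductive_set (in ring) aspan :: "'a set \<Rightarrow> 'a set \<Rightarrow> 'a set" for A V where
  az: "\<zero> \<in> aspan A V"
| astep: "a \<in> A \<Longrightarrow> v \<in> V \<Longrightarrow> m \<in> aspan A V \<Longrightarrow> a \<otimes> v \<oplus> m \<in> aspan A V"

context cring
begin

lemma aspan_carrier:
  assumes "A \<subseteq> carrier R" "V \<subseteq> carrier R"
  shows "m \<in> aspan A V \<Longrightarrow> m \<in> carrier R"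
  by (induction rule: aspan.induct) (use assms in auto)

lemma aspan_add:
  assumes "subring A R" "V \<subseteq> carrier R"
  shows "m \<in> aspan A V \<Longrightarrow> n \<in> aspan A V \<Longrightarrow> m \<oplus> n \<in> aspan A V"
proof (induction rule: aspan.induct)
  case az
  then show ?case using aspan_carrier[OF subringE(1)[OF assms(1)] assms(2)] by simp
next
  case (astep a v m)
  have c: "a \<in> carrier R" "v \<in> carrier R" "m \<in> carrier R" "n \<in> carrier R"
    using astep aspan_carrier[OF subringE(1)[OF assms(1)] assms(2)] subringE(1)[OF assms(1)] assms(2)
    by auto
  have "a \<otimes> v \<oplus> m \<oplus> n = a \<otimes> v \<oplus> (m \<oplus> n)" using c by algebra
  then show ?case using astep aspan.astep by auto
qed

lemma aspan_smult:
  assumes "subring A R" "V \<subseteq> carrier R" "b \<in> A"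
  shows "m \<in> aspan A V \<Longrightarrow> b \<otimes> m \<in> aspan A V"
proof (induction rule: aspan.induct)
  case az
  then show ?case using assms subringE(1)[OF assms(1)] aspan.az by auto
next
  case (astep a v m)
  have c: "a \<in> carrier R" "v \<in> carrier R" "m \<in> carrier R" "b \<in> carrier R"
    using astep aspan_carrier[OF subringE(1)[OF assms(1)] assms(2)] subringE(1)[OF assms(1)] assms
    by auto
  have "b \<otimes> (a \<otimes> v \<oplus> m) = (b \<otimes> a) \<otimes> v \<oplus> b \<otimes> m" using c by algebra
  moreover have "b \<otimes> a \<in> A" using subringE(6)[OF assms(1)] astep assms by auto
  ultimately show ?case using astep aspan.astep by auto
qed

lemma aspan_mono_A:
  assumes "A \<subseteq> B" shows "m \<in> aspan A V \<Longrightarrow> m \<in> aspan B V"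
  by (induction rule: aspan.induct) (use assms in \<open>auto intro: aspan.intros\<close>)

lemma aspan_mono_V:
  assumes "Z \<subseteq> Y" shows "m \<in> aspan A Z \<Longrightarrow> m \<in> aspan A Y"
  by (induction rule: aspan.induct) (use assms in \<open>auto intro: aspan.intros\<close>)

lemma aspan_empty: "aspan A {} = {\<zero>}"
proof -
  have "m \<in> aspan A {} \<Longrightarrow> m = \<zero>" for m
    by (induction rule: aspan.induct) auto
  thus ?thesis using aspan.az by auto
qed

lemma aspan_insert_decomp:
  assumes "subring A R" "insert g Z \<subseteq> carrier R"
  shows "m \<in> aspan A (insert g Z) \<Longrightarrow> \<exists>e\<in>aspan A Z. \<exists>d\<in>A. m = e \<oplus> d \<otimes> g"
proof (induction rule: aspan.induct)
  case az
  have "\<zero> \<in> A" using subringE(2)[OF assms(1)] .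
  moreover have "\<zero> = \<zero> \<oplus> \<zero> \<otimes> g" using assms by simp
  ultimately show ?case using aspan.az by blast
next
  case (astep a v m)
  then obtain e d where ed: "e \<in> aspan A Z" "d \<in> A" "m = e \<oplus> d \<otimes> g" by blast
  have AC: "A \<subseteq> carrier R" using subringE(1)[OF assms(1)] .
  have ec: "e \<in> carrier R" using aspan_carrier[OF AC, of Z] assms ed by auto
  have c: "a \<in> carrier R" "v \<in> carrier R" "d \<in> carrier R" "g \<in> carrier R"
    using astep ed AC assms by auto
  show ?case
  proof (cases "v = g")
    case True
    have "a \<otimes> v \<oplus> m = e \<oplus> (a \<oplus> d) \<otimes> g" using c ec ed True by algebra
    moreover have "a \<oplus> d \<in> A" using subringE(7)[OF assms(1)] astep ed by auto
    ultimately show ?thesis using ed by blast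
  next
    case False
    hence "v \<in> Z" using astep by auto
    have "a \<otimes> v \<oplus> m = (a \<otimes> v \<oplus> e) \<oplus> d \<otimes> g" using c ec ed by algebra
    moreover have "a \<otimes> v \<oplus> e \<in> aspan A Z" using aspan.astep astep \<open>v \<in> Z\<close> ed by auto
    ultimately show ?thesis using ed by blast
  qed
qed

lemma aspan_mult_into:
  assumes "subring A R" "V \<subseteq> carrier R" "Y \<subseteq> carrier R" "r \<in> carrier R"
    and "\<And>v. v \<in> V \<Longrightarrow> r \<otimes> v \<in> aspan A Y"
  shows "w \<in> aspan A V \<Longrightarrow> r \<otimes> w \<in> aspan A Y"
proof (induction rule: aspan.induct)
  case az
  then show ?case using assms aspan.az by simp
next
  case (astep a v m)
  have AC: "A \<subseteq> carrier R" using subringE(1)[OF assms(1)] .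
  have c: "a \<in> carrier R" "v \<in> carrier R" "m \<in> carrier R"
    using astep aspan_carrier[OF AC assms(2)] AC assms by auto
  have "r \<otimes> (a \<otimes> v \<oplus> m) = a \<otimes> (r \<otimes> v) \<oplus> r \<otimes> m" using c assms by algebra
  moreover have "a \<otimes> (r \<otimes> v) \<in> aspan A Y"
    using aspan_smult[OF assms(1) assms(3)] astep assms(5) by auto
  ultimately show ?case using aspan_add[OF assms(1) assms(3)] astep by auto
qed

lemma nakayama_aspan:
  assumes A: "subring A R" and V: "V \<subseteq> carrier R" "finite V" and h: "h \<in> A"
    and gen: "\<And>v. v \<in> V \<Longrightarrow> \<exists>w\<in>aspan A V. v = h \<otimes> w"
  shows "\<exists>a\<in>A. \<forall>v\<in>V. (\<one> \<oplus> h \<otimes> a) \<otimes> v = \<zero>"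
proof -
  have AC: "A \<subseteq> carrier R" using subringE(1)[OF A] .
  have hc: "h \<in> carrier R" using h AC by auto
  have claim: "W \<subseteq> V \<Longrightarrow> \<exists>a\<in>A. \<forall>v\<in>V. (\<one> \<oplus> h \<otimes> a) \<otimes> v \<in> aspan A (V - W)" for W
  proof -
    assume "W \<subseteq> V"
    hence "finite W" using V(2) finite_subset by auto
    thus ?thesis using \<open>W \<subseteq> V\<close>
    proof (induction W rule: finite_induct)
      case empty
      have "\<zero> \<in> A" using subringE(2)[OF A] .
      moreover have "(\<one> \<oplus> h \<otimes> \<zero>) \<otimes> v \<in> aspan A (V - {})" if "v \<in> V" for v
      proof -
        have "v \<in> carrier R" using that V by auto
        hence "(\<one> \<oplus> h \<otimes> \<zero>) \<otimes> v = \<one> \<otimes> v \<oplus> \<zero>" using hc by simp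
        moreover have "\<one> \<in> A" using subringE(3)[OF A] .
        ultimately show ?thesis using aspan.astep[of "\<one>" A v V \<zero>] aspan.az that by auto
      qed
      ultimately show ?case by blast
    next
      case (insert g W)
      then obtain a where a: "a \<in> A" "\<And>v. v \<in> V \<Longrightarrow> (\<one> \<oplus> h \<otimes> a) \<otimes> v \<in> aspan A (V - W)"
        by auto
      define r where "r = \<one> \<oplus> h \<otimes> a"
      have ac: "a \<in> carrier R" using a AC by auto
      have rA: "r \<in> A" unfolding r_def using subringE[OF A] a h by auto
      have rc: "r \<in> carrier R" using rA AC by auto
      define Z where "Z = V - insert g W"
      have gV: "g \<in> V" using insert by auto
      have VW: "V - W = insert g Z" using insert gV unfolding Z_def by auto
      have XC: "Z \<subseteq> carrier R" using V unfolding Z_def by auto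
      have IC: "insert g Z \<subseteq> carrier R" using V gV XC by auto
      have gc: "g \<in> carrier R" using gV V by auto
      obtain w where w: "w \<in> aspan A V" "g = h \<otimes> w" using gen gV by blast
      have "r \<otimes> w \<in> aspan A (insert g Z)"
        using aspan_mult_into[OF A V(1) IC rc, of w] a(2) w(1) VW unfolding r_def by auto
      then obtain e d where ed: "e \<in> aspan A Z" "d \<in> A" "r \<otimes> w = e \<oplus> d \<otimes> g"
        using aspan_insert_decomp[OF A IC] by blast
      have ec: "e \<in> carrier R" using aspan_carrier[OF AC XC] ed by auto
      have dc: "d \<in> carrier R" using ed AC by auto
      have wc: "w \<in> carrier R" using aspan_carrier[OF AC V(1)] w by auto
      define s where "s = r \<ominus> h \<otimes> d"
      have sA: "s \<in> A" unfolding s_def a_minus_def using subringE[OF A] rA h ed by auto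
      have sc: "s \<in> carrier R" using sA AC by auto
      have sg: "s \<otimes> g = h \<otimes> e"
      proof -
        have "s \<otimes> g = r \<otimes> (h \<otimes> w) \<ominus> h \<otimes> d \<otimes> g" unfolding s_def w(2)[symmetric]
          using rc hc dc gc by algebra
        also have "\<dots> = h \<otimes> (r \<otimes> w) \<ominus> h \<otimes> d \<otimes> g" using rc hc wc by algebra
        also have "\<dots> = h \<otimes> e" unfolding ed(3) using hc ec dc gc by algebra
        finally show ?thesis .
      qed
      have sgX: "s \<otimes> g \<in> aspan A Z" unfolding sg using aspan_smult[OF A XC h ed(1)] .
      define a' where "a' = a \<oplus> (a \<ominus> d) \<otimes> r"
      have a'A: "a' \<in> A" unfolding a'_def a_minus_def using subringE[OF A] a rA ed by auto
      have eq: "\<one> \<oplus> h \<otimes> a' = s \<otimes> r"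
        unfolding a'_def s_def r_def using hc ac dc by algebra
      have "(\<one> \<oplus> h \<otimes> a') \<otimes> v \<in> aspan A (V - insert g W)" if vV: "v \<in> V" for v
      proof -
        have vc: "v \<in> carrier R" using vV V by auto
        have "r \<otimes> v \<in> aspan A (insert g Z)" using a(2)[OF vV] VW unfolding r_def by auto
        then obtain e' d' where ed': "e' \<in> aspan A Z" "d' \<in> A" "r \<otimes> v = e' \<oplus> d' \<otimes> g"
          using aspan_insert_decomp[OF A IC] by blast
        have e'c: "e' \<in> carrier R" using aspan_carrier[OF AC XC] ed' by auto
        have d'c: "d' \<in> carrier R" using ed' AC by auto
        have "(\<one> \<oplus> h \<otimes> a') \<otimes> v = s \<otimes> (r \<otimes> v)" unfolding eq using sc rc vc by algebra
        also have "\<dots> = s \<otimes> e' \<oplus> d' \<otimes> (s \<otimes> g)" unfolding ed'(3) using sc e'c d'c gc by algebra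
        finally have "(\<one> \<oplus> h \<otimes> a') \<otimes> v = s \<otimes> e' \<oplus> d' \<otimes> (s \<otimes> g)" .
        moreover have "s \<otimes> e' \<in> aspan A Z" using aspan_smult[OF A XC sA ed'(1)] .
        moreover have "d' \<otimes> (s \<otimes> g) \<in> aspan A Z" using aspan_smult[OF A XC ed'(2) sgX] .
        ultimately show ?thesis using aspan_add[OF A XC] unfolding Z_def by auto
      qed
      thus ?case using a'A by blast
    qed
  qed
  from claim[of V] obtain a where "a \<in> A" "\<forall>v\<in>V. (\<one> \<oplus> h \<otimes> a) \<otimes> v \<in> aspan A {}" by auto
  thus ?thesis using aspan_empty by auto
qed

end

context field
begin

lemma gen_field_frac:
  assumes S: "subring S R" and H: "H \<subseteq> S"
  shows "c \<in> generate_field R H \<Longrightarrow> \<exists>b\<in>S - {\<zero>}. c \<otimes> b \<in> S"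
proof (induction rule: generate_field.induct)
  have SC: "S \<subseteq> carrier R" using subringE(1)[OF S] .
  {
  case one
  show ?case using subringE(3)[OF S] by (intro bexI[of _ \<one>]) auto
  next
  case (incl h)
  hence "h \<in> S" "h \<in> carrier R" using H SC by auto
  then show ?case using subringE(3)[OF S] by (intro bexI[of _ \<one>]) auto
  next
  case (a_inv h)
  then obtain b where b: "b \<in> S - {\<zero>}" "h \<otimes> b \<in> S" by auto
  have hc: "h \<in> carrier R" using generate_field_in_carrier H SC a_inv by blast
  have "b \<in> carrier R" using b SC by auto
  hence "\<ominus> h \<otimes> b = \<ominus> (h \<otimes> b)" using hc by (simp add: l_minus)
  moreover have "\<ominus> (h \<otimes> b) \<in> S" using b subringE(5)[OF S] by blast
  ultimately have "\<ominus> h \<otimes> b \<in> S" by simp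
  show ?case by (rule bexI[of _ b]) (use b \<open>\<ominus> h \<otimes> b \<in> S\<close> in auto)
  next
  case (m_inv h)
  then obtain b where b: "b \<in> S - {\<zero>}" "h \<otimes> b \<in> S" by auto
  have hc: "h \<in> carrier R" using generate_field_in_carrier H SC m_inv by blast
  have bc: "b \<in> carrier R" using b SC by auto
  have hb0: "h \<otimes> b \<noteq> \<zero>" using m_inv b hc bc integral by blast
  have hU: "h \<in> Units R" using hc m_inv field_Units by auto
  have "inv h \<otimes> (h \<otimes> b) = (inv h \<otimes> h) \<otimes> b" using hU hc bc by (simp add: m_assoc[symmetric] Units_inv_closed)
  also have "\<dots> = b" using hU bc by simp
  finally have "inv h \<otimes> (h \<otimes> b) = b" .
  then show ?case using b hb0 by (intro bexI[of _ "h \<otimes> b"]) auto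
  next
  case (eng_add h1 h2)
  then obtain b1 b2 where b: "b1 \<in> S - {\<zero>}" "h1 \<otimes> b1 \<in> S" "b2 \<in> S - {\<zero>}" "h2 \<otimes> b2 \<in> S" by auto
  have hc: "h1 \<in> carrier R" "h2 \<in> carrier R" using generate_field_in_carrier H SC eng_add by blast+
  have bc: "b1 \<in> carrier R" "b2 \<in> carrier R" using b SC by auto
  have "(h1 \<oplus> h2) \<otimes> (b1 \<otimes> b2) = (h1 \<otimes> b1) \<otimes> b2 \<oplus> (h2 \<otimes> b2) \<otimes> b1"
    using hc bc by algebra
  moreover have "b1 \<otimes> b2 \<in> S - {\<zero>}" using b bc integral subringE(6)[OF S] by auto
  moreover have "(h1 \<otimes> b1) \<otimes> b2 \<oplus> (h2 \<otimes> b2) \<otimes> b1 \<in> S"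
    using b subringE(6,7)[OF S] by auto
  ultimately show ?case by metis
  next
  case (eng_mult h1 h2)
  then obtain b1 b2 where b: "b1 \<in> S - {\<zero>}" "h1 \<otimes> b1 \<in> S" "b2 \<in> S - {\<zero>}" "h2 \<otimes> b2 \<in> S" by auto
  have hc: "h1 \<in> carrier R" "h2 \<in> carrier R" using generate_field_in_carrier H SC eng_mult by blast+
  have bc: "b1 \<in> carrier R" "b2 \<in> carrier R" using b SC by auto
  have "(h1 \<otimes> h2) \<otimes> (b1 \<otimes> b2) = (h1 \<otimes> b1) \<otimes> (h2 \<otimes> b2)"
    using hc bc by algebra
  moreover have "b1 \<otimes> b2 \<in> S - {\<zero>}" using b bc integral subringE(6)[OF S] by auto
  moreover have "(h1 \<otimes> b1) \<otimes> (h2 \<otimes> b2) \<in> S"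
    using b subringE(6)[OF S] by auto
  ultimately show ?case by metis
  }
qed

lemma nz_mult: "x \<in> carrier R \<Longrightarrow> y \<in> carrier R \<Longrightarrow> x \<noteq> \<zero> \<Longrightarrow> y \<noteq> \<zero> \<Longrightarrow> x \<otimes> y \<noteq> \<zero>"
  using integral by blast

lemma nz_mult_S: "S \<subseteq> carrier R \<Longrightarrow> x \<in> S - {\<zero>} \<Longrightarrow> y \<in> S - {\<zero>} \<Longrightarrow> x \<otimes> y \<noteq> \<zero>"
  using nz_mult by blast

definition Den :: "'a set \<Rightarrow> 'a \<Rightarrow> 'a set" where
  "Den S g = {c \<in> carrier R. \<exists>n::nat. c \<otimes> g [^] n \<in> S}"

lemma Den_subring:
  assumes S: "subring S R" and g: "g \<in> S"
  shows "subring (Den S g) R"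
proof -
  have SC: "S \<subseteq> carrier R" using subringE(1)[OF S] .
  have gc: "g \<in> carrier R" using g SC by auto
  have gp: "g [^] (n::nat) \<in> S" for n
    by (induction n) (use subringE(3,6)[OF S] g in auto)
  show ?thesis
  proof (rule subringI)
    show "Den S g \<subseteq> carrier R" unfolding Den_def by auto
    show "\<one> \<in> Den S g" unfolding Den_def
      using subringE(3)[OF S] by (auto intro!: exI[of _ 0])
  next
    fix h assume "h \<in> Den S g"
    then obtain n :: nat where n: "h \<in> carrier R" "h \<otimes> g [^] n \<in> S" unfolding Den_def by auto
    have "\<ominus> h \<otimes> g [^] n = \<ominus> (h \<otimes> g [^] n)" using n gc by (simp add: l_minus)
    hence "\<ominus> h \<otimes> g [^] n \<in> S" using n subringE(5)[OF S] by simp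
    thus "\<ominus> h \<in> Den S g" unfolding Den_def using n by blast
  next
    fix h1 h2 assume "h1 \<in> Den S g" "h2 \<in> Den S g"
    then obtain n1 n2 :: nat where n: "h1 \<in> carrier R" "h1 \<otimes> g [^] n1 \<in> S"
        "h2 \<in> carrier R" "h2 \<otimes> g [^] n2 \<in> S" unfolding Den_def by auto
    have "(h1 \<otimes> h2) \<otimes> g [^] (n1 + n2) = (h1 \<otimes> g [^] n1) \<otimes> (h2 \<otimes> g [^] n2)"
      using n gc by (simp add: nat_pow_mult[symmetric] m_ac)
    hence "(h1 \<otimes> h2) \<otimes> g [^] (n1 + n2) \<in> S" using n subringE(6)[OF S] by simp
    thus "h1 \<otimes> h2 \<in> Den S g" unfolding Den_def using n by blast
    have G: "g [^] n1 \<in> carrier R" "g [^] n2 \<in> carrier R" using gc by auto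
    have "(h1 \<oplus> h2) \<otimes> g [^] (n1 + n2) = (h1 \<oplus> h2) \<otimes> (g [^] n1 \<otimes> g [^] n2)"
      using gc by (simp add: nat_pow_mult)
    also have "\<dots> = (h1 \<otimes> g [^] n1) \<otimes> g [^] n2 \<oplus> (h2 \<otimes> g [^] n2) \<otimes> g [^] n1"
      using n G by algebra
    finally have "(h1 \<oplus> h2) \<otimes> g [^] (n1 + n2) = (h1 \<otimes> g [^] n1) \<otimes> g [^] n2 \<oplus> (h2 \<otimes> g [^] n2) \<otimes> g [^] n1" .
    hence "(h1 \<oplus> h2) \<otimes> g [^] (n1 + n2) \<in> S" using n subringE(6,7)[OF S] gp by simp
    thus "h1 \<oplus> h2 \<in> Den S g" unfolding Den_def using n by blast
  qed
qed

lemma S_sub_Den: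
  assumes S: "subring S R" shows "S \<subseteq> Den S g"
  using subringE(1)[OF S] unfolding Den_def by (auto intro!: exI[of _ 0])

lemma Den_mono:
  assumes S: "subring S R" and g: "g \<in> S" and b: "b \<in> S"
  shows "Den S g \<subseteq> Den S (g \<otimes> b)"
proof
  have SC: "S \<subseteq> carrier R" using subringE(1)[OF S] .
  have bp: "b [^] (n::nat) \<in> S" for n
    by (induction n) (use subringE(3,6)[OF S] b in auto)
  fix c assume "c \<in> Den S g"
  then obtain n :: nat where n: "c \<in> carrier R" "c \<otimes> g [^] n \<in> S" unfolding Den_def by auto
  have gc: "g \<in> carrier R" "b \<in> carrier R" using g b SC by auto
  have "c \<otimes> (g \<otimes> b) [^] n = (c \<otimes> g [^] n) \<otimes> b [^] n"
    using n gc by (simp add: nat_pow_distrib m_assoc)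
  hence "c \<otimes> (g \<otimes> b) [^] n \<in> S" using n bp subringE(6)[OF S] by simp
  thus "c \<in> Den S (g \<otimes> b)" unfolding Den_def using n by blast
qed

lemma Span_sub_aspan:
  assumes "set Us \<subseteq> carrier R"
  shows "Span L Us \<subseteq> aspan L (set Us)"
  using assms
proof (induction Us)
  case Nil
  then show ?case using aspan.az by auto
next
  case (Cons u Us)
  show ?case
  proof
    fix x assume "x \<in> Span L (u # Us)"
    then obtain k v where kv: "k \<in> L" "v \<in> Span L Us" "x = k \<otimes> u \<oplus> v"
      using line_extension_mem_iff by auto
    have "v \<in> aspan L (set (u # Us))"
      using Cons aspan_mono_V[of "set Us" "set (u#Us)"] kv by auto
    thus "x \<in> aspan L (set (u # Us))" using kv aspan.astep by auto
  qed
qed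

lemma aspan_Den:
  assumes S: "subring S R" and V: "V \<subseteq> carrier R"
    and fr: "\<And>c. c \<in> L \<Longrightarrow> \<exists>b\<in>S - {\<zero>}. c \<otimes> b \<in> S" and LC: "L \<subseteq> carrier R"
  shows "x \<in> aspan L V \<Longrightarrow> \<exists>g\<in>S - {\<zero>}. x \<in> aspan (Den S g) V"
proof (induction rule: aspan.induct)
  case az
  then show ?case using subringE(3)[OF S] aspan.az by auto
next
  case (astep a v m)
  have SC: "S \<subseteq> carrier R" using subringE(1)[OF S] .
  obtain g where g: "g \<in> S - {\<zero>}" "m \<in> aspan (Den S g) V" using astep by auto
  obtain b where b: "b \<in> S - {\<zero>}" "a \<otimes> b \<in> S" using fr astep by auto
  have gb: "g \<otimes> b \<in> S - {\<zero>}" using g b nz_mult_S[OF SC] subringE(6)[OF S] by auto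
  have bc: "b \<in> carrier R" "g \<in> carrier R" using b g SC by auto
  have "a \<in> Den S b" unfolding Den_def using b astep LC bc
    by (auto intro!: exI[of _ 1])
  moreover have "b \<otimes> g = g \<otimes> b" using bc m_comm by auto
  ultimately have "a \<in> Den S (g \<otimes> b)"
    using Den_mono[OF S, of b g] b g by auto
  moreover have "m \<in> aspan (Den S (g \<otimes> b)) V"
    using aspan_mono_A[OF Den_mono[OF S, of g b]] g b by auto
  ultimately show ?case using gb astep aspan.astep by blast
qed

lemma aspan_Den_finite:
  assumes S: "subring S R" and V: "V \<subseteq> carrier R"
    and fr: "\<And>c. c \<in> L \<Longrightarrow> \<exists>b\<in>S - {\<zero>}. c \<otimes> b \<in> S" and LC: "L \<subseteq> carrier R"
    and F: "finite F" "F \<subseteq> aspan L V"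
  shows "\<exists>g\<in>S - {\<zero>}. F \<subseteq> aspan (Den S g) V"
  using F
proof (induction F rule: finite_induct)
  case empty
  then show ?case using subringE(3)[OF S] by auto
next
  case (insert x F)
  have SC: "S \<subseteq> carrier R" using subringE(1)[OF S] .
  obtain g where g: "g \<in> S - {\<zero>}" "F \<subseteq> aspan (Den S g) V" using insert by auto
  have "x \<in> aspan L V" using insert by auto
  then obtain b where b: "b \<in> S - {\<zero>}" "x \<in> aspan (Den S b) V"
    using aspan_Den[OF S V fr LC] by blast
  have gb: "g \<otimes> b \<in> S - {\<zero>}" using g b nz_mult_S[OF SC] subringE(6)[OF S] by auto
  have F1: "F \<subseteq> aspan (Den S (g \<otimes> b)) V"
    using aspan_mono_A[OF Den_mono[OF S, of g b]] g b by auto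
  have gbc: "g \<in> carrier R" "b \<in> carrier R" using g b SC by auto
  hence "b \<otimes> g = g \<otimes> b" using m_comm by simp
  hence x1: "x \<in> aspan (Den S (g \<otimes> b)) V"
    using aspan_mono_A[OF Den_mono[OF S, of b g]] g b by auto
  show ?case using gb F1 x1 by (intro bexI[of _ "g \<otimes> b"]) auto
qed

lemma pow_eq_zero_field:
  assumes "x \<in> carrier R" "x [^] (n::nat) = \<zero>" shows "x = \<zero>"
  using assms
proof (induction n)
  case 0
  then show ?case by simp
next
  case (Suc n)
  have "x [^] n \<otimes> x = \<zero>" using Suc by simp
  then show ?case using Suc integral by blast
qed

end

context field
begin

lemma eval_lin: "x \<in> carrier R \<Longrightarrow> c \<in> carrier R \<Longrightarrow> eval [\<one>, \<ominus> c] x = x \<ominus> c"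
  by (simp add: a_minus_def)

lemma transc_contra:
  assumes K: "subfield K R" and inf: "infinite K" and t: "t \<in> carrier R"
    and tr: "(transcendental over K) t"
    and ys: "set ys \<subseteq> carrier R"
    and gen: "carrier R \<subseteq> finite_extension K (t # ys)"
    and fd: "finite_dimension (generate_field R (insert t K)) (carrier R)"
  shows False
proof -
  have KS: "subring K R" using subfieldE(1)[OF K] .
  have KC: "K \<subseteq> carrier R" using subfieldE(3)[OF K] .
  define S where "S = simple_extension K t"
  have S: "subring S R" unfolding S_def using simple_extension_is_subring[OF KS t] .
  have SC: "S \<subseteq> carrier R" using subringE(1)[OF S] .
  have KsubS: "K \<subseteq> S" unfolding S_def using simple_extension_incl[OF KC t] .
  have tS: "t \<in> S" unfolding S_def using simple_extension_mem[OF KS t] .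
  define L where "L = generate_field R (insert t K)"
  have HC: "insert t K \<subseteq> carrier R" using KC t by auto
  have Lsub: "subfield L R" unfolding L_def using generate_field_is_subfield[OF HC] .
  have LC: "L \<subseteq> carrier R" using subfieldE(3)[OF Lsub] .
  have fr: "\<And>c. c \<in> L \<Longrightarrow> \<exists>b\<in>S - {\<zero>}. c \<otimes> b \<in> S"
    unfolding L_def using gen_field_frac[OF S] KsubS tS by blast
  have "dimension ((dim over L) (carrier R)) L (carrier R)"
    using finite_dimensionE[OF Lsub] fd unfolding L_def by blast
  then obtain Us where Us: "set Us \<subseteq> carrier R" "Span L Us = carrier R"
    using exists_base[OF Lsub] by blast
  define V where "V = set Us"
  have VC: "V \<subseteq> carrier R" and Vfin: "finite V" using Us unfolding V_def by auto
  have all: "carrier R \<subseteq> aspan L V" using Span_sub_aspan[OF Us(1)] Us(2) unfolding V_def by auto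
  define F where "F = insert \<one> ((\<lambda>(y,u). y \<otimes> u) ` (set ys \<times> V))"
  have Ffin: "finite F" unfolding F_def using Vfin by auto
  have FC: "F \<subseteq> carrier R" unfolding F_def using ys VC by auto
  obtain g where g: "g \<in> S - {\<zero>}" "F \<subseteq> aspan (Den S g) V"
    using aspan_Den_finite[OF S VC fr LC Ffin] FC all by blast
  define A where "A = Den S g"
  have A: "subring A R" unfolding A_def using Den_subring[OF S] g by auto
  have AC: "A \<subseteq> carrier R" using subringE(1)[OF A] .
  have SA: "S \<subseteq> A" unfolding A_def using S_sub_Den[OF S] .
  have FA: "F \<subseteq> aspan A V" using g unfolding A_def by auto
  have aspC: "\<And>m. m \<in> aspan A V \<Longrightarrow> m \<in> carrier R" using aspan_carrier[OF AC VC] by blast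
  define T where "T = {f \<in> carrier R. \<forall>m\<in>aspan A V. f \<otimes> m \<in> aspan A V}"
  have AT: "A \<subseteq> T" unfolding T_def using AC aspan_smult[OF A VC] by auto
  have ysT: "set ys \<subseteq> T"
  proof
    fix y assume y: "y \<in> set ys"
    have yc: "y \<in> carrier R" using y ys by auto
    have "\<And>v. v \<in> V \<Longrightarrow> y \<otimes> v \<in> aspan A V" using FA y unfolding F_def by auto
    thus "y \<in> T" unfolding T_def using aspan_mult_into[OF A VC VC yc] yc by auto
  qed
  have mone: "\<ominus> \<one> \<in> A" using subringE(3,5)[OF A] by auto
  have T: "subring T R"
  proof (rule subringI)
    show "T \<subseteq> carrier R" unfolding T_def by auto
    show "\<one> \<in> T" unfolding T_def using aspC by auto
  next
    fix h assume h: "h \<in> T"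
    have hc: "h \<in> carrier R" using h unfolding T_def by auto
    have "\<And>m. m \<in> aspan A V \<Longrightarrow> \<ominus> h \<otimes> m = \<ominus> \<one> \<otimes> (h \<otimes> m)"
      using hc aspC by algebra
    thus "\<ominus> h \<in> T" unfolding T_def using hc h aspan_smult[OF A VC mone] unfolding T_def by auto
  next
    fix h1 h2 assume h: "h1 \<in> T" "h2 \<in> T"
    have hc: "h1 \<in> carrier R" "h2 \<in> carrier R" using h unfolding T_def by auto
    have "\<And>m. m \<in> aspan A V \<Longrightarrow> (h1 \<otimes> h2) \<otimes> m = h1 \<otimes> (h2 \<otimes> m)"
      using hc aspC by algebra
    thus "h1 \<otimes> h2 \<in> T" using h hc unfolding T_def by auto
    have "\<And>m. m \<in> aspan A V \<Longrightarrow> (h1 \<oplus> h2) \<otimes> m = h1 \<otimes> m \<oplus> h2 \<otimes> m"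
      using hc aspC by algebra
    thus "h1 \<oplus> h2 \<in> T" using h hc aspan_add[OF A VC] unfolding T_def by auto
  qed
  have "finite_extension K (t # ys) \<subseteq> T"
    using finite_extension_subring_incl[OF T, of K "t # ys"] KsubS SA AT tS ysT by auto
  hence CT: "carrier R \<subseteq> T" using gen by auto
  have oneA: "\<one> \<in> aspan A V" using FA unfolding F_def by auto
  have allA: "\<And>f. f \<in> carrier R \<Longrightarrow> f \<in> aspan A V"
  proof -
    fix f assume f: "f \<in> carrier R"
    hence "f \<in> T" using CT by auto
    hence "f \<otimes> \<one> \<in> aspan A V" using oneA unfolding T_def by blast
    thus "f \<in> aspan A V" using f by simp
  qed
  have "g \<in> (\<lambda>p. eval p t) ` carrier (K[X])"
    using simple_extension_as_eval_img[OF KC t] g unfolding S_def by auto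
  then obtain P where P: "P \<in> carrier (K[X])" "g = eval P t" by auto
  have Pne: "P \<noteq> []" using P g by auto
  have "polynomial K P" using P univ_poly_carrier by blast
  hence "polynomial (carrier R) P" using KC unfolding polynomial_def by auto
  hence PR: "P \<in> carrier (poly_ring R)" using univ_poly_carrier by blast
  have "finite {x. is_root P x}" using finite_number_of_roots[OF PR] .
  hence "\<not> K \<subseteq> {x. is_root P x}" using inf finite_subset by blast
  then obtain c where c: "c \<in> K" "\<not> is_root P c" by blast
  have cc: "c \<in> carrier R" using c KC by auto
  have Pc: "eval P c \<noteq> \<zero>" using c cc Pne unfolding is_root_def by auto
  define h where "h = t \<ominus> c"
  have hS: "h \<in> S" unfolding h_def a_minus_def using subringE(5,7)[OF S] tS KsubS c by auto
  have hc: "h \<in> carrier R" using hS SC by auto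
  have hA: "h \<in> A" using hS SA by auto
  have h0: "h \<noteq> \<zero>"
  proof
    assume "h = \<zero>"
    hence "t = c" unfolding h_def using t cc by (metis r_right_minus_eq)
    thus False using tr algebraic_self[OF KS c(1)] unfolding over_def by auto
  qed
  have hU: "h \<in> Units R" using hc h0 field_Units by auto
  have gen2: "\<And>v. v \<in> V \<Longrightarrow> \<exists>w\<in>aspan A V. v = h \<otimes> w"
  proof -
    fix v assume v: "v \<in> V"
    have vc: "v \<in> carrier R" using v VC by auto
    have "h \<otimes> (inv h \<otimes> v) = v" using hU vc hc by (simp add: m_assoc[symmetric] Units_inv_closed)
    moreover have "inv h \<otimes> v \<in> aspan A V" using allA hU vc Units_inv_closed by auto
    ultimately show "\<exists>w\<in>aspan A V. v = h \<otimes> w" by metis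
  qed
  obtain a where a: "a \<in> A" "\<forall>v\<in>V. (\<one> \<oplus> h \<otimes> a) \<otimes> v = \<zero>"
    using nakayama_aspan[OF A VC Vfin hA gen2] by blast
  have ac: "a \<in> carrier R" using a AC by auto
  have rc: "\<one> \<oplus> h \<otimes> a \<in> carrier R" using hc ac by auto
  have "(\<one> \<oplus> h \<otimes> a) \<otimes> \<one> \<in> aspan A {}"
    using aspan_mult_into[OF A VC _ rc, of "{}"] a(2) aspan.az oneA by auto
  hence r0: "\<one> \<oplus> h \<otimes> a = \<zero>" using aspan_empty rc by auto
  obtain n :: nat where n: "a \<otimes> g [^] n \<in> S" using a unfolding A_def Den_def by auto
  define p where "p = a \<otimes> g [^] n"
  have gc: "g \<in> carrier R" using g SC by auto
  have Gc: "g [^] n \<in> carrier R" using gc by auto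
  have eq: "g [^] n \<oplus> h \<otimes> p = \<zero>"
  proof -
    have "g [^] n \<oplus> h \<otimes> p = g [^] n \<otimes> (\<one> \<oplus> h \<otimes> a)" unfolding p_def using Gc hc ac by algebra
    thus ?thesis using r0 Gc by simp
  qed
  have "p \<in> (\<lambda>p. eval p t) ` carrier (K[X])"
    using simple_extension_as_eval_img[OF KC t] n unfolding S_def p_def by auto
  then obtain Q where Q: "Q \<in> carrier (K[X])" "p = eval Q t" by auto
  define B where "B = [\<one>, \<ominus> c]"
  have "polynomial K B" unfolding B_def polynomial_def
    using subringE(3,5)[OF KS] c by auto
  hence B: "B \<in> carrier (K[X])" using univ_poly_carrier by blast
  interpret UP: cring "K[X]" using univ_poly_is_cring[OF KS] .
  define Z where "Z = P [^]\<^bsub>K[X]\<^esub> n \<oplus>\<^bsub>K[X]\<^esub> B \<otimes>\<^bsub>K[X]\<^esub> Q"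
  have ZC: "Z \<in> carrier (K[X])" unfolding Z_def using P B Q by auto
  have homt: "ring_hom_ring (K[X]) R (\<lambda>p. eval p t)"
    using ring_hom_ringI2[OF UP.ring_axioms ring_axioms eval_is_hom[OF KS t]] .
  have homc: "ring_hom_ring (K[X]) R (\<lambda>p. eval p c)"
    using ring_hom_ringI2[OF UP.ring_axioms ring_axioms eval_is_hom[OF KS cc]] .
  have hBt: "eval B t = h" unfolding B_def h_def using eval_lin[OF t cc] .
  have hBc: "eval B c = c \<ominus> c" unfolding B_def using eval_lin[OF cc cc] .
  have "eval Z t = g [^] n \<oplus> h \<otimes> p"
    unfolding Z_def using P B Q
    by (simp add: ring_hom_add[OF eval_is_hom[OF KS t]] ring_hom_mult[OF eval_is_hom[OF KS t]]
        ring_hom_ring.hom_nat_pow[OF homt] P(2) Q(2) hBt del: eval.simps)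
  hence "eval Z t = \<zero>" using eq by simp
  hence Z0: "Z = []" using eval_transcendental[OF tr ZC] by simp
  have "eval Z c = (eval P c) [^] n \<oplus> (c \<ominus> c) \<otimes> eval Q c"
    unfolding Z_def using P B Q
    by (simp add: ring_hom_add[OF eval_is_hom[OF KS cc]] ring_hom_mult[OF eval_is_hom[OF KS cc]]
        ring_hom_ring.hom_nat_pow[OF homc] hBc del: eval.simps)
  also have "\<dots> = (eval P c) [^] n"
  proof -
    have "eval Q c \<in> carrier R" using ring_hom_closed[OF eval_is_hom[OF KS cc] Q(1)] .
    moreover have "eval P c \<in> carrier R" using ring_hom_closed[OF eval_is_hom[OF KS cc] P(1)] .
    ultimately have "(c \<ominus> c) \<otimes> eval Q c = \<zero>" "eval P c [^] n \<in> carrier R"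
      using cc by (algebra, simp)
    thus ?thesis by simp
  qed
  finally have "(eval P c) [^] n = \<zero>" using Z0 by simp
  hence "eval P c = \<zero>" using pow_eq_zero_field ring_hom_closed[OF eval_is_hom[OF KS cc] P(1)] by blast
  thus False using Pc by simp
qed

end

context field
begin

lemma fe_absorb:
  assumes L: "subfield L R" and KL: "K \<subseteq> L" and tL: "t \<in> L" and ys: "set ys \<subseteq> carrier R"
  shows "finite_extension K (t # ys) \<subseteq> finite_extension L ys"
proof -
  have LS: "subring L R" using subfieldE(1)[OF L] .
  have LC: "L \<subseteq> carrier R" using subfieldE(3)[OF L] .
  have FS: "subring (finite_extension L ys) R" using finite_extension_is_subring[OF LS ys] .
  have LF: "L \<subseteq> finite_extension L ys" using finite_extension_incl[OF LC ys] .
  have "set ys \<subseteq> finite_extension L ys" using finite_extension_mem[OF LS ys] .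
  thus ?thesis using finite_extension_subring_incl[OF FS, of K "t # ys"] KL LF tL by auto
qed

lemma zariski:
  assumes "subfield K R" "infinite K" "set xs \<subseteq> carrier R" "carrier R \<subseteq> finite_extension K xs"
  shows "finite_dimension K (carrier R)"
  using assms
proof (induction xs arbitrary: K)
  case Nil
  have "carrier R = K" using Nil subfieldE(3)[OF Nil(1)] by auto
  thus ?case using dimension_one[OF Nil(1)] unfolding finite_dimension_def by auto
next
  case (Cons t ys)
  have K: "subfield K R" and t: "t \<in> carrier R" and ys: "set ys \<subseteq> carrier R"
    using Cons by auto
  have KC: "K \<subseteq> carrier R" using subfieldE(3)[OF K] .
  show ?case
  proof (cases "(algebraic over K) t")
    case True
    define L where "L = simple_extension K t"
    have L: "subfield L R" unfolding L_def using simple_extension_is_subfield[OF K t] True by auto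
    have KL: "K \<subseteq> L" unfolding L_def using simple_extension_incl[OF KC t] .
    have tL: "t \<in> L" unfolding L_def using simple_extension_mem[OF subfieldE(1)[OF K] t] .
    have "infinite L" using Cons(3) KL finite_subset by blast
    moreover have "carrier R \<subseteq> finite_extension L ys" using fe_absorb[OF L KL tL ys] Cons(5) by auto
    ultimately have fL: "finite_dimension L (carrier R)" using Cons.IH[OF L] ys by auto
    have fKL: "finite_dimension K L" unfolding L_def
      using finite_dimension_simple_extension[OF K t] True by auto
    show ?thesis using telescopic_base_dim(1)[OF K L fKL fL] .
  next
    case False
    define L where "L = generate_field R (insert t K)"
    have HC: "insert t K \<subseteq> carrier R" using KC t by auto
    have L: "subfield L R" unfolding L_def using generate_field_is_subfield[OF HC] .
    have KL: "K \<subseteq> L" unfolding L_def using generate_field.incl[of _ "insert t K" R] by auto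
    have tL: "t \<in> L" unfolding L_def using generate_field.incl[of t "insert t K" R] by auto
    have "infinite L" using Cons(3) KL finite_subset by blast
    moreover have "carrier R \<subseteq> finite_extension L ys" using fe_absorb[OF L KL tL ys] Cons(5) by auto
    ultimately have fL: "finite_dimension L (carrier R)" using Cons.IH[OF L] ys by auto
    have "(transcendental over K) t" using False unfolding over_def by auto
    hence False using transc_contra[OF K Cons(3) t _ ys Cons(5)] fL unfolding L_def by auto
    thus ?thesis ..
  qed
qed

lemma zariski_alg:
  assumes "subfield K R" "infinite K" "set xs \<subseteq> carrier R" "carrier R \<subseteq> finite_extension K xs"
    and "x \<in> carrier R"
  shows "(algebraic over K) x"
  using finite_dimension_imp_algebraic[OF assms(1) carrier_is_subring zariski[OF assms(1-4)]] assms(5) .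

end

context field
begin

lemma alg_in_K:
  assumes K: "subfield K R"
    and roots: "\<And>p. p \<in> carrier (K[X]) \<Longrightarrow> degree p > 0 \<Longrightarrow> \<exists>c\<in>K. eval p c = \<zero>"
    and x: "x \<in> carrier R" and alg: "(algebraic over K) x"
  shows "x \<in> K"
proof -
  have KS: "subring K R" using subfieldE(1)[OF K] .
  have KC: "K \<subseteq> carrier R" using subfieldE(3)[OF K] .
  interpret UP: domain "K[X]" using univ_poly_is_domain[OF KS] .
  have main: "\<And>p. p \<in> carrier (K[X]) \<Longrightarrow> p \<noteq> [] \<Longrightarrow> degree p = n \<Longrightarrow> eval p x = \<zero> \<Longrightarrow> x \<in> K" for n
  proof (induction n rule: less_induct)
    case (less n p)
    have pK: "polynomial K p" using less(2) univ_poly_carrier by blast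
    show ?case
    proof (cases "degree p = 0")
      case True
      then obtain a where a: "p = [a]" using less(3) by (cases p) auto
      have "a \<in> K - {\<zero>}" using pK a unfolding polynomial_def by auto
      hence "eval p x \<noteq> \<zero>" using a KC by auto
      thus ?thesis using less by auto
    next
      case False
      hence "degree p > 0" by simp
      then obtain c where c: "c \<in> K" "eval p c = \<zero>" using roots[OF less(2)] by blast
      have cc: "c \<in> carrier R" using c KC by auto
      define b where "b = [\<one>, \<ominus> c]"
      have bK: "polynomial K b" unfolding b_def polynomial_def
        using subringE(3,5)[OF KS] c by auto
      have bC: "b \<in> carrier (K[X])" using bK univ_poly_carrier by blast
      have Units1: "lead_coeff b \<in> Units (R \<lparr> carrier := K \<rparr>)"
        unfolding b_def Units_def using subringE(3)[OF KS] by (auto intro!: bexI[of _ \<one>])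
      obtain q r where qr: "polynomial K q" "polynomial K r"
          "p = (b \<otimes>\<^bsub>K[X]\<^esub> q) \<oplus>\<^bsub>K[X]\<^esub> r" "r = [] \<or> degree r < degree b"
        using long_division_theorem[OF KS pK bK _ Units1] unfolding b_def by auto
      have qC: "q \<in> carrier (K[X])" and rC: "r \<in> carrier (K[X])" using qr univ_poly_carrier by blast+
      have homc: "(\<lambda>p. eval p c) \<in> ring_hom (K[X]) R" using eval_is_hom[OF KS cc] .
      have homx: "(\<lambda>p. eval p x) \<in> ring_hom (K[X]) R" using eval_is_hom[OF KS x] .
      have bc: "eval b c = \<zero>" unfolding b_def using cc by (simp add: a_minus_def r_neg)
      have evc: "eval p c = eval b c \<otimes> eval q c \<oplus> eval r c"
        using qr(3) ring_hom_add[OF homc] ring_hom_mult[OF homc] bC qC rC by simp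
      have "eval q c \<in> carrier R" using ring_hom_closed[OF homc qC] .
      moreover have "eval r c \<in> carrier R" using ring_hom_closed[OF homc rC] .
      ultimately have "eval r c = \<zero>" using evc bc c by simp
      have r0: "r = []"
      proof (rule ccontr)
        assume "r \<noteq> []"
        hence "degree r = 0" using qr(4) unfolding b_def by auto
        then obtain a where a: "r = [a]" using \<open>r \<noteq> []\<close> by (cases r) auto
        have "a \<in> K - {\<zero>}" using qr(2) a unfolding polynomial_def by auto
        hence "eval r c \<noteq> \<zero>" using a KC by auto
        thus False using \<open>eval r c = \<zero>\<close> by simp
      qed
      have pbq: "p = b \<otimes>\<^bsub>K[X]\<^esub> q" using qr(3) r0 UP.r_zero[OF UP.m_closed[OF bC qC]] unfolding univ_poly_zero by simp
      have q0: "q \<noteq> []" using pbq less(3) UP.r_null[OF bC] unfolding univ_poly_zero by auto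
      have "degree p = degree b + degree q"
        using pbq poly_mult_degree_eq[OF KS bK qr(1)] q0 unfolding b_def by (simp add: univ_poly_mult)
      hence dq: "degree q < n" using less(4) unfolding b_def by simp
      have "eval p x = eval b x \<otimes> eval q x" using pbq ring_hom_mult[OF homx] bC qC by simp
      moreover have "eval b x = x \<ominus> c" unfolding b_def using x cc by (simp add: a_minus_def)
      ultimately have "(x \<ominus> c) \<otimes> eval q x = \<zero>" using less(5) by simp
      moreover have "eval q x \<in> carrier R" using ring_hom_closed[OF homx qC] .
      ultimately have "x \<ominus> c = \<zero> \<or> eval q x = \<zero>" using integral x cc by blast
      thus ?thesis
      proof
        assume "x \<ominus> c = \<zero>"
        hence "x = c" using x cc by (metis r_right_minus_eq)
        thus ?thesis using c by simp
      next
        assume "eval q x = \<zero>"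
        thus ?thesis using less.IH[OF dq qC q0 refl] by simp
      qed
    qed
  qed
  obtain p where "p \<in> carrier (K[X])" "p \<noteq> []" "eval p x = \<zero>"
    using algebraicE[OF KS x alg] by blast
  thus ?thesis using main by blast
qed

end

abbreviation Rr :: "'r::comm_ring_1 ring"
  where "Rr \<equiv> \<lparr>carrier = UNIV, mult = (*), one = 1, zero = 0, add = (+)\<rparr>"

lemma Rr_cring: "cring (Rr :: 'r::comm_ring_1 ring)"
proof (rule cringI)
  show "abelian_group (Rr :: 'r ring)"
    by (rule abelian_groupI) (auto intro: left_minus)
  show "Group.comm_monoid (Rr :: 'r ring)"
    by (simp add: Group.monoid.intro monoid.monoid_comm_monoidI mult.commute mult.assoc)
qed (auto simp: distrib_right)

lemma Rr_a_inv: "a_inv (Rr :: 'r::comm_ring_1 ring) x = - x"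
proof -
  interpret cring "Rr :: 'r ring" by (rule Rr_cring)
  show ?thesis by (rule minus_equality) auto
qed

lemma Rr_pow: "x [^]\<^bsub>(Rr :: 'r::comm_ring_1 ring)\<^esub> (n::nat) = x ^ n"
  by (induction n) auto

lemma Rr_minus: "a_minus (Rr :: 'r::comm_ring_1 ring) x y = x - y"
  by (simp add: a_minus_def Rr_a_inv)


fun evk :: "'k::comm_ring_1 list \<Rightarrow> 'k \<Rightarrow> 'k" where
  "evk [] x = 0"
| "evk (a # l) x = a * x ^ length l + evk l x"

lemma evk_sum: "evk cs x = (\<Sum>i<length cs. rev cs ! i * x ^ i)"
proof (induction cs)
  case Nil
  then show ?case by simp
next
  case (Cons a l)
  have "(\<Sum>i<length (a # l). rev (a # l) ! i * x ^ i)
      = (\<Sum>i<length l. rev (a # l) ! i * x ^ i) + rev (a # l) ! length l * x ^ length l"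
    by simp
  also have "(\<Sum>i<length l. rev (a # l) ! i * x ^ i) = (\<Sum>i<length l. rev l ! i * x ^ i)"
    by (rule sum.cong) (auto simp: nth_append)
  also have "rev (a # l) ! length l = a" by (simp add: nth_append)
  finally show ?case using Cons by simp
qed

lemma alg_closed_infinite: "infinite (UNIV :: 'k::alg_closed_field set)"
proof
  assume fin: "finite (UNIV :: 'k set)"
  define Q :: "'k poly" where "Q = (\<Prod>a\<in>UNIV. [:-a, 1:])"
  define P :: "'k poly" where "P = Q + 1"
  have dQ: "Polynomial.degree Q = card (UNIV :: 'k set)"
    unfolding Q_def by (subst degree_prod_eq_sum_degree) auto
  have "card (UNIV :: 'k set) > 0" using fin by (simp add: card_gt_0_iff)
  hence "Polynomial.degree P > 0" unfolding P_def using dQ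
    by (subst degree_add_eq_left) auto
  then obtain x where x: "poly P x = 0" using alg_closed_imp_poly_has_root by blast
  have "poly Q x = 0" unfolding Q_def poly_prod using fin
    by (rule prod_zero) (auto intro!: bexI[of _ x])
  thus False using x unfolding P_def by simp
qed

context field
begin

lemma roots_transfer:
  fixes \<psi> :: "'k::alg_closed_field \<Rightarrow> 'a"
  assumes hadd: "\<And>a b. \<psi> (a + b) = \<psi> a \<oplus> \<psi> b" and hmul: "\<And>a b. \<psi> (a * b) = \<psi> a \<otimes> \<psi> b"
    and h0: "\<psi> 0 = \<zero>" and h1: "\<psi> 1 = \<one>" and hC: "\<And>a. \<psi> a \<in> carrier R"
    and p: "p \<in> carrier ((range \<psi>)[X])" and d: "degree p > 0"
  shows "\<exists>c\<in>range \<psi>. eval p c = \<zero>"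
proof -
  have pol: "polynomial (range \<psi>) p" using p univ_poly_carrier by blast
  hence sp: "set p \<subseteq> range \<psi>" unfolding polynomial_def by auto
  define cs where "cs = map (\<lambda>z. SOME c. z = \<psi> c) p"
  have peq: "p = map \<psi> cs" unfolding cs_def
  proof (rule nth_equalityI)
    fix i assume "i < length p"
    hence "p ! i \<in> range \<psi>" using sp by auto
    thus "p ! i = map \<psi> (map (\<lambda>z. SOME c. z = \<psi> c) p) ! i"
      using \<open>i < length p\<close> by (auto intro: someI)
  qed simp
  have hpow: "\<psi> (x ^ n) = \<psi> x [^] n" for x n
    by (induction n) (auto simp: h1 hmul m_comm hC)
  have hev: "eval (map \<psi> l) (\<psi> x) = \<psi> (evk l x)" for l x
    by (induction l) (auto simp: h0 hadd hmul hpow)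
  have ne: "p \<noteq> []" using d by auto
  have "lead_coeff p \<noteq> \<zero>" using pol ne unfolding polynomial_def by auto
  hence c0: "cs ! 0 \<noteq> 0" using peq ne h0 by (cases cs) auto
  define n where "n = length cs - 1"
  have n0: "n > 0" using d peq unfolding n_def by simp
  have "rev cs ! n = cs ! 0" unfolding n_def using ne peq by (simp add: rev_nth)
  hence "rev cs ! n \<noteq> 0" using c0 by simp
  then obtain x where x: "(\<Sum>k\<le>n. rev cs ! k * x ^ k) = 0"
    using alg_closed[OF n0, of "\<lambda>k. rev cs ! k"] by blast
  have "length cs > 0" using ne peq by auto
  hence "\<And>k. k \<le> n \<longleftrightarrow> k < length cs" unfolding n_def by arith
  hence "{..n} = {..<length cs}" by auto
  hence "evk cs x = 0" using x by (simp only: evk_sum)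
  hence "eval p (\<psi> x) = \<zero>" using hev peq h0 by simp
  thus ?thesis by blast
qed

end

lemma zariski_tc:
  fixes \<phi> :: "'k::alg_closed_field \<Rightarrow> 'r::comm_ring_1" and m :: "'r set"
  assumes phi: "alg_map \<phi>" and fg: "fin_gen_algebra \<phi>"
    and m0: "0 \<in> m" and madd: "\<And>a b. a \<in> m \<Longrightarrow> b \<in> m \<Longrightarrow> a + b \<in> m"
    and mmul: "\<And>a r. a \<in> m \<Longrightarrow> r * a \<in> m"
    and m1: "1 \<notin> m" and mmax: "\<And>r. r \<notin> m \<Longrightarrow> \<exists>s. 1 - s * r \<in> m"
  shows "\<exists>c. t - \<phi> c \<in> m"
proof -
  have p1: "\<phi> 1 = 1" and padd: "\<And>a b. \<phi> (a + b) = \<phi> a + \<phi> b"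
    and pmul: "\<And>a b. \<phi> (a * b) = \<phi> a * \<phi> b"
    using phi unfolding alg_map_def by auto
  have p0: "\<phi> 0 = 0" using padd[of 0 0] by simp
  have pneg: "\<phi> (- a) = - \<phi> a" for a
  proof -
    have "\<phi> a + \<phi> (- a) = 0" using padd[of a "-a"] p0 by simp
    thus ?thesis by (metis add.inverse_unique)
  qed
  have psub: "\<phi> (a - b) = \<phi> a - \<phi> b" for a b
    using padd[of a "-b"] pneg[of b] by simp
  have mneg: "a \<in> m \<Longrightarrow> - a \<in> m" for a using mmul[of a "-1"] by simp
  have msub: "a \<in> m \<Longrightarrow> b \<in> m \<Longrightarrow> a - b \<in> m" for a b
    using madd[of a "-b"] mneg[of b] by simp
  interpret Rc: cring "Rr :: 'r ring" by (rule Rr_cring)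
  have ideal: "ideal m (Rr :: 'r ring)"
  proof (rule idealI[OF Rc.ring_axioms])
    show "subgroup m (add_monoid (Rr :: 'r ring))"
      by (rule Rc.add.subgroupI) (use m0 madd mneg in \<open>auto simp: Rr_a_inv\<close>)
  qed (use mmul in \<open>auto simp: mult.commute\<close>)
  interpret Im: ideal m "Rr :: 'r ring" by (rule ideal)
  have maxi: "maximalideal m (Rr :: 'r ring)"
  proof (rule maximalidealI[OF ideal])
    show "carrier (Rr :: 'r ring) \<noteq> m" using m1 by auto
  next
    fix J assume J: "ideal J (Rr :: 'r ring)" "m \<subseteq> J" "J \<subseteq> carrier (Rr :: 'r ring)"
    show "J = m \<or> J = carrier (Rr :: 'r ring)"
    proof (cases "J = m")
      case False
      then obtain r where r: "r \<in> J" "r \<notin> m" using J by auto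
      then obtain s where s: "1 - s * r \<in> m" using mmax by auto
      have "s * r \<in> J" using ideal.I_l_closed[OF J(1) r(1)] by simp
      moreover have "1 - s * r \<in> J" using s J by auto
      moreover have cl: "\<And>x y. x \<in> J \<Longrightarrow> y \<in> J \<Longrightarrow> x + y \<in> J"
        using additive_subgroup.a_closed[OF ideal.axioms(1)[OF J(1)]] by simp
      ultimately have "(1 - s * r) + s * r \<in> J" by blast
      hence "1 \<in> J" by (metis diff_add_cancel)
      hence "J = carrier (Rr :: 'r ring)" using ideal.one_imp_carrier[OF J(1)] by simp
      thus ?thesis by simp
    qed simp
  qed
  define F where "F = (Rr :: 'r ring) Quot m"
  have field: "field F" unfolding F_def using maximalideal.quotient_is_field[OF maxi Rr_cring] .
  interpret Fd: field F by (rule field)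
  define \<pi> where "\<pi> = (\<lambda>x. m +>\<^bsub>(Rr :: 'r ring)\<^esub> x)"
  have hom: "\<pi> \<in> ring_hom (Rr :: 'r ring) F" unfolding \<pi>_def F_def using ideal.rcos_ring_hom[OF ideal] .
  have \<pi>add: "\<pi> (a + b) = \<pi> a \<oplus>\<^bsub>F\<^esub> \<pi> b" for a b using ring_hom_add[OF hom, of a b] by simp
  have \<pi>mul: "\<pi> (a * b) = \<pi> a \<otimes>\<^bsub>F\<^esub> \<pi> b" for a b using ring_hom_mult[OF hom, of a b] by simp
  have \<pi>1: "\<pi> 1 = \<one>\<^bsub>F\<^esub>" using ring_hom_one[OF hom] by simp
  have \<pi>C: "\<pi> a \<in> carrier F" for a using ring_hom_closed[OF hom, of a] by simp
  have \<pi>0: "\<pi> 0 = \<zero>\<^bsub>F\<^esub>" using \<pi>add[of 0 0] \<pi>C[of 0] by simp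
  have \<pi>neg: "\<pi> (- a) = \<ominus>\<^bsub>F\<^esub> \<pi> a" for a
  proof -
    have "\<pi> (- a) \<oplus>\<^bsub>F\<^esub> \<pi> a = \<zero>\<^bsub>F\<^esub>" using \<pi>add[of "-a" a] \<pi>0 by simp
    thus ?thesis using Fd.minus_equality \<pi>C by metis
  qed
  have \<pi>zero: "\<pi> x = \<zero>\<^bsub>F\<^esub> \<longleftrightarrow> x \<in> m" for x
  proof
    assume "\<pi> x = \<zero>\<^bsub>F\<^esub>"
    hence "m +>\<^bsub>(Rr :: 'r ring)\<^esub> x = m" unfolding \<pi>_def F_def FactRing_def by simp
    moreover have "x \<in> m +>\<^bsub>(Rr :: 'r ring)\<^esub> x"
      using Im.a_rcos_self[of x] by simp
    ultimately show "x \<in> m" by simp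
  next
    assume "x \<in> m"
    thus "\<pi> x = \<zero>\<^bsub>F\<^esub>" unfolding \<pi>_def F_def FactRing_def using Im.a_rcos_const by simp
  qed
  have \<pi>eq: "\<pi> a = \<pi> b \<longleftrightarrow> a - b \<in> m" for a b
  proof -
    have "\<pi> (a - b) = \<pi> a \<ominus>\<^bsub>F\<^esub> \<pi> b"
      using \<pi>add[of a "-b"] \<pi>neg[of b] by (simp add: a_minus_def)
    hence "\<pi> (a - b) = \<zero>\<^bsub>F\<^esub> \<longleftrightarrow> \<pi> a = \<pi> b"
      using Fd.r_right_minus_eq \<pi>C by simp
    thus ?thesis using \<pi>zero by blast
  qed
  define \<psi> where "\<psi> = (\<lambda>c. \<pi> (\<phi> c))"
  have \<psi>add: "\<psi> (a + b) = \<psi> a \<oplus>\<^bsub>F\<^esub> \<psi> b" for a b unfolding \<psi>_def using padd \<pi>add by simp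
  have \<psi>mul: "\<psi> (a * b) = \<psi> a \<otimes>\<^bsub>F\<^esub> \<psi> b" for a b unfolding \<psi>_def using pmul \<pi>mul by simp
  have \<psi>0: "\<psi> 0 = \<zero>\<^bsub>F\<^esub>" unfolding \<psi>_def using p0 \<pi>0 by simp
  have \<psi>1: "\<psi> 1 = \<one>\<^bsub>F\<^esub>" unfolding \<psi>_def using p1 \<pi>1 by simp
  have \<psi>C: "\<psi> a \<in> carrier F" for a unfolding \<psi>_def using \<pi>C by simp
  have \<psi>neg: "\<psi> (- a) = \<ominus>\<^bsub>F\<^esub> \<psi> a" for a unfolding \<psi>_def using pneg \<pi>neg by simp
  define K0 where "K0 = range \<psi>"
  have K0S: "subring K0 F"
  proof (rule Fd.subringI)
    show "K0 \<subseteq> carrier F" unfolding K0_def using \<psi>C by auto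
    show "\<one>\<^bsub>F\<^esub> \<in> K0" unfolding K0_def using \<psi>1 by (metis rangeI)
  next
    fix h assume "h \<in> K0" then obtain a where "h = \<psi> a" unfolding K0_def by auto
    thus "\<ominus>\<^bsub>F\<^esub> h \<in> K0" unfolding K0_def using \<psi>neg by (metis rangeI)
  next
    fix h1 h2 assume "h1 \<in> K0" "h2 \<in> K0"
    then obtain a b where "h1 = \<psi> a" "h2 = \<psi> b" unfolding K0_def by auto
    thus "h1 \<otimes>\<^bsub>F\<^esub> h2 \<in> K0" "h1 \<oplus>\<^bsub>F\<^esub> h2 \<in> K0"
      unfolding K0_def using \<psi>add \<psi>mul by (metis rangeI)+
  qed
  have K0sub: "subfield K0 F"
  proof (rule Fd.subfieldI'[OF K0S])
    fix k assume k: "k \<in> K0 - {\<zero>\<^bsub>F\<^esub>}"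
    then obtain c where c: "k = \<psi> c" unfolding K0_def by auto
    have "c \<noteq> 0" using k c \<psi>0 by auto
    hence "\<psi> c \<otimes>\<^bsub>F\<^esub> \<psi> (inverse c) = \<one>\<^bsub>F\<^esub>" using \<psi>mul[of c "inverse c"] \<psi>1 by simp
    hence "inv\<^bsub>F\<^esub> k = \<psi> (inverse c)" using Fd.comm_inv_char \<psi>C c by simp
    thus "inv\<^bsub>F\<^esub> k \<in> K0" unfolding K0_def by simp
  qed
  have K0C: "K0 \<subseteq> carrier F" using subringE(1)[OF K0S] .
  have injpsi: "inj \<psi>"
  proof (rule injI)
    fix a b assume "\<psi> a = \<psi> b"
    hence "\<phi> a - \<phi> b \<in> m" using \<pi>eq unfolding \<psi>_def by simp
    hence d: "\<phi> (a - b) \<in> m" using psub by simp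
    show "a = b"
    proof (rule ccontr)
      assume "a \<noteq> b"
      hence "\<phi> (inverse (a - b)) * \<phi> (a - b) = 1" using pmul[symmetric] p1 by simp
      thus False using mmul[OF d, of "\<phi> (inverse (a - b))"] m1 by simp
    qed
  qed
  have K0inf: "infinite K0" unfolding K0_def
    using alg_closed_infinite injpsi finite_imageD by blast
  obtain S where S: "finite S" "subalg_gen \<phi> S = UNIV" using fg unfolding fin_gen_algebra_def by auto
  have "finite (\<pi> ` S)" using S(1) by simp
  then obtain xs where xs: "set xs = \<pi> ` S" using finite_list by blast
  have xsC: "set xs \<subseteq> carrier F" using xs \<pi>C by auto
  define FE where "FE = Fd.finite_extension K0 xs"
  have FES: "subring FE F" unfolding FE_def using Fd.finite_extension_is_subring[OF K0S xsC] .
  have K0FE: "K0 \<subseteq> FE" unfolding FE_def using Fd.finite_extension_incl[OF K0C xsC] .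
  have xsFE: "set xs \<subseteq> FE" unfolding FE_def using Fd.finite_extension_mem[OF K0S xsC] .
  have inFE: "r \<in> subalg_gen \<phi> S \<Longrightarrow> \<pi> r \<in> FE" for r
  proof (induction rule: subalg_gen.induct)
    case (const c)
    then show ?case using K0FE unfolding K0_def \<psi>_def by auto
  next
    case (gen s)
    then show ?case using xsFE xs by auto
  next
    case (add a b)
    then show ?case using \<pi>add subringE(7)[OF FES] by simp
  next
    case (mult a b)
    then show ?case using \<pi>mul subringE(6)[OF FES] by simp
  qed
  have gen: "carrier F \<subseteq> Fd.finite_extension K0 xs"
  proof
    fix z assume "z \<in> carrier F"
    then obtain x where "z = \<pi> x" unfolding F_def FactRing_def A_RCOSETS_def' \<pi>_def by auto
    thus "z \<in> Fd.finite_extension K0 xs" using inFE S(2) unfolding FE_def by auto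
  qed
  have alg: "(Fd.algebraic over K0) (\<pi> t)"
    using Fd.zariski_alg[OF K0sub K0inf xsC gen \<pi>C] .
  have roots: "\<And>p. p \<in> carrier (K0[X]\<^bsub>F\<^esub>) \<Longrightarrow> Polynomials.degree p > 0 \<Longrightarrow> \<exists>c\<in>K0. Fd.eval p c = \<zero>\<^bsub>F\<^esub>"
    unfolding K0_def using Fd.roots_transfer[OF \<psi>add \<psi>mul \<psi>0 \<psi>1 \<psi>C] by blast
  have "\<pi> t \<in> K0" using Fd.alg_in_K[OF K0sub roots \<pi>C alg] .
  then obtain c where "\<pi> t = \<pi> (\<phi> c)" unfolding K0_def \<psi>_def by auto
  thus ?thesis using \<pi>eq by blast
qed


context Modules.module
begin

lemma scale_span_all:
  assumes F: "finite F" and sp: "span F = UNIV" and rv: "\<And>v. v \<in> F \<Longrightarrow> scale r v \<in> span T"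
  shows "scale r u \<in> span T"
proof -
  have "u \<in> span F" using sp by auto
  then obtain c where u: "u = (\<Sum>v\<in>F. scale (c v) v)" using span_finite[OF F] by auto
  have "scale r u = (\<Sum>v\<in>F. scale (c v) (scale r v))"
    unfolding u by (simp add: scale_sum_right mult.commute)
  also have "\<dots> \<in> span T" by (rule span_sum, rule span_scale, rule rv)
  finally show ?thesis .
qed

lemma nakayama_tc:
  assumes F: "finite F" "span F = UNIV"
    and good: "\<And>u. \<exists>w. u = (\<Sum>i<length y. scale (y!i) (w i))"
  shows "\<exists>b. \<forall>u. scale (1 - (\<Sum>i<length y. y!i * b i)) u = 0"
proof -
  let ?n = "length y"
  have claim: "W \<subseteq> F \<Longrightarrow> \<exists>b. \<forall>v\<in>F. scale (1 - (\<Sum>i<?n. y!i * b i)) v \<in> span (F - W)" for W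
  proof -
    assume WF: "W \<subseteq> F"
    hence "finite W" using F(1) finite_subset by auto
    thus ?thesis using WF
    proof (induction W rule: finite_induct)
      case empty
      show ?case by (intro exI[of _ "\<lambda>_. 0"]) (auto intro: span_base)
    next
      case (insert g W)
      then obtain b where b: "\<And>v. v \<in> F \<Longrightarrow> scale (1 - (\<Sum>i<?n. y!i * b i)) v \<in> span (F - W)" by auto
      define A where "A = (\<Sum>i<?n. y!i * b i)"
      define r where "r = 1 - A"
      define Z where "Z = F - insert g W"
      have FW: "F - W = insert g Z" using insert unfolding Z_def by auto
      have rall: "\<And>u. scale r u \<in> span (insert g Z)"
        using scale_span_all[OF F] b FW unfolding r_def A_def by auto
      obtain w where w: "g = (\<Sum>i<?n. scale (y!i) (w i))" using good by blast
      have "\<forall>i. \<exists>d. scale r (w i) - scale d g \<in> span Z" using rall span_breakdown_eq by blast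
      then obtain d where d: "\<And>i. scale r (w i) - scale (d i) g \<in> span Z" by metis
      define \<alpha> where "\<alpha> = (\<Sum>i<?n. y!i * d i)"
      have "scale r g = (\<Sum>i<?n. scale (y!i) (scale r (w i) - scale (d i) g)) + scale \<alpha> g"
      proof -
        have "scale r g = (\<Sum>i<?n. scale (y!i) (scale r (w i)))"
          unfolding w by (simp add: scale_sum_right mult.commute)
        also have "\<dots> = (\<Sum>i<?n. scale (y!i) (scale r (w i) - scale (d i) g) + scale (y!i * d i) g)"
          by (rule sum.cong) (auto simp: scale_right_diff_distrib)
        also have "\<dots> = (\<Sum>i<?n. scale (y!i) (scale r (w i) - scale (d i) g)) + scale \<alpha> g"
          unfolding \<alpha>_def by (simp add: sum.distrib scale_sum_left)
        finally show ?thesis .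
      qed
      hence rg: "scale (r - \<alpha>) g \<in> span Z"
        using d by (auto simp: scale_left_diff_distrib intro!: span_sum span_scale)
      define b' where "b' = (\<lambda>i. b i + (b i + d i) * (1 - A))"
      have A': "1 - (\<Sum>i<?n. y!i * b' i) = (r - \<alpha>) * r"
      proof -
        have "(\<Sum>i<?n. y!i * b' i) = (\<Sum>i<?n. y!i * b i) + (\<Sum>i<?n. y!i * (b i + d i)) * (1 - A)"
        proof -
          have "\<And>i. y!i * b' i = y!i * b i + (y!i * (b i + d i)) * (1 - A)"
            unfolding b'_def by (simp add: algebra_simps)
          hence "(\<Sum>i<?n. y!i * b' i) = (\<Sum>i<?n. y!i * b i + (y!i * (b i + d i)) * (1 - A))" by simp
          also have "\<dots> = (\<Sum>i<?n. y!i * b i) + (\<Sum>i<?n. y!i * (b i + d i)) * (1 - A)"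
            by (simp only: sum.distrib sum_distrib_right)
          finally show ?thesis .
        qed
        also have "(\<Sum>i<?n. y!i * (b i + d i)) = A + \<alpha>"
          unfolding A_def \<alpha>_def by (simp add: distrib_left sum.distrib)
        finally have "(\<Sum>i<?n. y!i * b' i) = A + (A + \<alpha>) * (1 - A)" unfolding A_def .
        thus ?thesis unfolding r_def by (simp add: algebra_simps)
      qed
      have "\<forall>v\<in>F. scale (1 - (\<Sum>i<?n. y!i * b' i)) v \<in> span (F - insert g W)"
      proof
        fix v assume "v \<in> F"
        have "scale r v \<in> span (insert g Z)" using rall by auto
        then obtain k where k: "scale r v - scale k g \<in> span Z" using span_breakdown_eq by blast
        have "scale (1 - (\<Sum>i<?n. y!i * b' i)) v = scale (r - \<alpha>) (scale r v - scale k g) + scale k (scale (r - \<alpha>) g)"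
          unfolding A' by (simp add: scale_right_diff_distrib mult.commute)
        also have "\<dots> \<in> span Z" by (rule span_add; rule span_scale; fact)
        finally show "scale (1 - (\<Sum>i<?n. y!i * b' i)) v \<in> span (F - insert g W)" unfolding Z_def .
      qed
      thus ?case by blast
    qed
  qed
  from claim[of F] obtain b where b: "\<forall>v\<in>F. scale (1 - (\<Sum>i<?n. y!i * b i)) v \<in> span {}" by auto
  have "scale (1 - (\<Sum>i<?n. y!i * b i)) u \<in> span {}" for u
    using scale_span_all[OF F] b by blast
  thus ?thesis by auto
qed

end

definition kos_h :: "('r::comm_ring_1 \<Rightarrow> 'm::ab_group_add \<Rightarrow> 'm) \<Rightarrow> nat \<Rightarrow> nat \<Rightarrow> (nat set \<Rightarrow> 'm) \<Rightarrow> nat set \<Rightarrow> 'm" where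
  "kos_h smul n i c K = (if i \<in> K \<and> K \<subseteq> {..<n} then smul ((-1) ^ card {j \<in> K - {i}. j < i}) (c (K - {i})) else 0)"

lemma sign_cancel:
  fixes J :: "nat set"
  assumes fin: "finite J" and iJ: "i \<in> J" and kJ: "k \<notin> J"
  shows "(-1::'a::comm_ring_1) ^ card {j \<in> J. j < k} * (-1) ^ card {j \<in> insert k (J - {i}). j < i}
       + (-1) ^ card {j \<in> J - {i}. j < i} * (-1) ^ card {j \<in> J - {i}. j < k} = 0"
proof -
  define a where "a = card {j \<in> J - {i}. j < k}"
  define b where "b = card {j \<in> J - {i}. j < i}"
  have ik: "i \<noteq> k" using iJ kJ by auto
  have f1: "finite {j \<in> J - {i}. j < k}" "finite {j \<in> J - {i}. j < i}" using fin by auto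
  have e1: "{j \<in> J. j < k} = (if i < k then insert i {j \<in> J - {i}. j < k} else {j \<in> J - {i}. j < k})"
    using iJ by auto
  have c1: "card {j \<in> J. j < k} = (if i < k then Suc a else a)"
    unfolding e1 a_def using f1 by (auto simp: card_insert_disjoint)
  have e2: "{j \<in> insert k (J - {i}). j < i} = (if k < i then insert k {j \<in> J - {i}. j < i} else {j \<in> J - {i}. j < i})"
    by auto
  have c2: "card {j \<in> insert k (J - {i}). j < i} = (if k < i then Suc b else b)"
    unfolding e2 b_def using f1 kJ by (auto simp: card_insert_disjoint)
  show ?thesis
    unfolding c1 c2 a_def[symmetric] b_def[symmetric] using ik
    by (cases "i < k") (auto simp: power_add[symmetric] algebra_simps)
qed

context Modules.module
begin

lemma kos_homotopy:
  assumes i: "i < length y" and cvan: "\<And>K. \<not> K \<subseteq> {..<length y} \<Longrightarrow> c K = 0"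
  shows "kos_d scale y (kos_h scale (length y) i c) J + kos_h scale (length y) i (kos_d scale y c) J
         = scale (y!i) (c J)"
proof -
  let ?n = "length y"
  let ?s = "\<lambda>A k. (-1::'a) ^ card {j \<in> A. j < k}"
  show ?thesis
  proof (cases "J \<subseteq> {..<?n}")
    case False
    then show ?thesis using cvan[OF False] unfolding kos_d_def kos_h_def by auto
  next
    case Jn: True
    have finJ: "finite J" using Jn finite_subset by blast
    show ?thesis
    proof (cases "i \<in> J")
      case False
      have h2: "kos_h scale ?n i (kos_d scale y c) J = 0" unfolding kos_h_def using False by auto
      have "kos_d scale y (kos_h scale ?n i c) J
          = (\<Sum>k\<in>{..<?n} - J. scale (?s J k * y!k) (kos_h scale ?n i c (insert k J)))"
        unfolding kos_d_def using Jn by simp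
      also have "\<dots> = (\<Sum>k\<in>{..<?n} - J. if k = i then scale (?s J i * y!i) (scale (?s J i) (c J)) else 0)"
      proof (rule sum.cong[OF refl])
        fix k assume k: "k \<in> {..<?n} - J"
        show "scale (?s J k * y!k) (kos_h scale ?n i c (insert k J))
            = (if k = i then scale (?s J i * y!i) (scale (?s J i) (c J)) else 0)"
        proof (cases "k = i")
          case True
          have "insert i J - {i} = J" using False by auto
          thus ?thesis unfolding kos_h_def using True k Jn by auto
        next
          case ki: False
          hence "i \<notin> insert k J" using False by auto
          thus ?thesis unfolding kos_h_def using ki by auto
        qed
      qed
      also have "\<dots> = scale (?s J i * y!i) (scale (?s J i) (c J))"
        using i False by (simp add: sum.delta')
      also have "\<dots> = scale (y!i) (c J)"
        by (simp add: algebra_simps power_add[symmetric] flip: power_add mult.assoc)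
      finally show ?thesis using h2 by simp
    next
      case True
      define J' where "J' = J - {i}"
      have J'n: "J' \<subseteq> {..<?n}" using Jn unfolding J'_def by auto
      have iJ': "i \<notin> J'" unfolding J'_def by auto
      have JJ': "insert i J' = J" unfolding J'_def using True by auto
      have dom: "{..<?n} - J' = insert i ({..<?n} - J)" using i True unfolding J'_def by auto
      have h2: "kos_h scale ?n i (kos_d scale y c) J
          = scale (?s J' i) (kos_d scale y c J')"
        unfolding kos_h_def J'_def using True Jn by auto
      also have "kos_d scale y c J' = (\<Sum>k\<in>{..<?n} - J'. scale (?s J' k * y!k) (c (insert k J')))"
        unfolding kos_d_def using J'n by simp
      also have "\<dots> = scale (?s J' i * y!i) (c J) + (\<Sum>k\<in>{..<?n} - J. scale (?s J' k * y!k) (c (insert k J')))"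
        unfolding dom using JJ' True by (subst sum.insert) auto
      finally have h2': "kos_h scale ?n i (kos_d scale y c) J
          = scale (y!i) (c J) + (\<Sum>k\<in>{..<?n} - J. scale (?s J' i * (?s J' k * y!k)) (c (insert k J')))"
        by (simp add: scale_sum_right scale_right_distrib algebra_simps flip: power_add mult.assoc)
      have h1: "kos_d scale y (kos_h scale ?n i c) J
          = (\<Sum>k\<in>{..<?n} - J. scale (?s J k * y!k) (scale (?s (insert k J') i) (c (insert k J'))))"
        unfolding kos_d_def using Jn
      proof (simp only: if_True, intro sum.cong refl)
        fix k assume k: "k \<in> {..<?n} - J"
        have "insert k J - {i} = insert k J'" unfolding J'_def using k True by auto
        thus "scale (?s J k * y!k) (kos_h scale ?n i c (insert k J))
            = scale (?s J k * y!k) (scale (?s (insert k J') i) (c (insert k J')))"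
          unfolding kos_h_def using k True Jn by auto
      qed
      have "kos_d scale y (kos_h scale ?n i c) J + kos_h scale ?n i (kos_d scale y c) J
          = scale (y!i) (c J) + (\<Sum>k\<in>{..<?n} - J. scale ((?s J k * ?s (insert k J') i + ?s J' i * ?s J' k) * y!k) (c (insert k J')))"
        unfolding h1 h2' by (simp add: sum.distrib[symmetric] scale_left_distrib algebra_simps)
      also have "\<dots> = scale (y!i) (c J)"
      proof -
        have "\<And>k. k \<in> {..<?n} - J \<Longrightarrow> ?s J k * ?s (insert k J') i + ?s J' i * ?s J' k = 0"
          unfolding J'_def using sign_cancel[OF finJ True] by blast
        thus ?thesis by simp
      qed
      finally show ?thesis .
    qed
  qed
qed

end

context Modules.module
begin

lemma kos_d_lin:
  "kos_d scale y (\<lambda>K. \<Sum>i\<in>A. scale (b i) (g i K)) J = (\<Sum>i\<in>A. scale (b i) (kos_d scale y (g i) J))"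
proof (cases "J \<subseteq> {..<length y}")
  case True
  have "kos_d scale y (\<lambda>K. \<Sum>i\<in>A. scale (b i) (g i K)) J
      = (\<Sum>k\<in>{..<length y} - J. \<Sum>i\<in>A. scale (b i) (scale ((-1) ^ card {j \<in> J. j < k} * y!k) (g i (insert k J))))"
    unfolding kos_d_def using True by (simp add: scale_sum_right mult.commute)
  also have "\<dots> = (\<Sum>i\<in>A. \<Sum>k\<in>{..<length y} - J. scale (b i) (scale ((-1) ^ card {j \<in> J. j < k} * y!k) (g i (insert k J))))"
    by (rule sum.swap)
  also have "\<dots> = (\<Sum>i\<in>A. scale (b i) (kos_d scale y (g i) J))"
    unfolding kos_d_def using True by (simp add: scale_sum_right)
  finally show ?thesis .
next
  case False
  then show ?thesis unfolding kos_d_def by simp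
qed

lemma kos_exact_iff:
  assumes F: "finite F" "span F = UNIV"
  shows "kos_exact scale y \<longleftrightarrow> (\<forall>u. \<exists>w. u = (\<Sum>i<length y. scale (y!i) (w i)))"
proof
  assume ex: "kos_exact scale y"
  show "\<forall>u. \<exists>w. u = (\<Sum>i<length y. scale (y!i) (w i))"
  proof
    fix u
    define c0 :: "nat set \<Rightarrow> 'b" where "c0 = (\<lambda>I. if I = {} then u else 0)"
    have c0ch: "c0 \<in> kos_chains (length y) 0" unfolding kos_chains_def c0_def
      by (auto dest: finite_subset[OF _ finite_lessThan])
    have "kos_d scale y c0 = (\<lambda>_. 0)"
      unfolding kos_d_def c0_def by (auto intro!: ext)
    then obtain e where e: "e \<in> kos_chains (length y) (Suc 0)" "kos_d scale y e = c0"
      using ex c0ch unfolding kos_exact_def by fastforce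
    have "u = kos_d scale y e {}" using e(2) unfolding c0_def by simp
    also have "\<dots> = (\<Sum>i<length y. scale (y!i) (e {i}))" unfolding kos_d_def by simp
    finally show "\<exists>w. u = (\<Sum>i<length y. scale (y!i) (w i))" by (intro exI[of _ "\<lambda>i. e {i}"])
  qed
next
  assume good: "\<forall>u. \<exists>w. u = (\<Sum>i<length y. scale (y!i) (w i))"
  obtain b where b: "\<And>u. scale (1 - (\<Sum>i<length y. y!i * b i)) u = 0"
    using nakayama_tc[OF F] good by blast
  let ?n = "length y"
  show "kos_exact scale y" unfolding kos_exact_def
  proof (intro allI impI ballI)
    fix p c assume p: "p \<le> ?n" and c: "c \<in> kos_chains ?n p" and dc: "kos_d scale y c = (\<lambda>_. 0)"
    have cvan: "\<And>K. \<not> (K \<subseteq> {..<?n} \<and> card K = p) \<Longrightarrow> c K = 0" using c unfolding kos_chains_def by auto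
    define e where "e = (\<lambda>K. \<Sum>i<?n. scale (b i) (kos_h scale ?n i c K))"
    have "e \<in> kos_chains ?n (Suc p)" unfolding kos_chains_def
    proof (intro CollectI allI impI)
      fix K assume K: "\<not> (K \<subseteq> {..<?n} \<and> card K = Suc p)"
      have "kos_h scale ?n i c K = 0" for i
      proof (cases "i \<in> K \<and> K \<subseteq> {..<?n}")
        case True
        hence fK: "finite K" using finite_subset by blast
        have "card (K - {i}) = card K - 1" using True fK by simp
        moreover have "card K \<ge> 1" using True fK by (metis card_0_eq empty_iff less_one not_le)
        ultimately have "card (K - {i}) \<noteq> p" using K True by auto
        hence "c (K - {i}) = 0" using cvan by auto
        thus ?thesis unfolding kos_h_def by simp
      next
        case False
        thus ?thesis unfolding kos_h_def by auto
      qed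
      thus "e K = 0" unfolding e_def by simp
    qed
    moreover have "kos_d scale y e = c"
    proof
      fix J
      have "kos_d scale y e J = (\<Sum>i<?n. scale (b i) (kos_d scale y (kos_h scale ?n i c) J))"
        unfolding e_def by (rule kos_d_lin)
      also have "\<dots> = (\<Sum>i<?n. scale (b i) (scale (y!i) (c J)))"
      proof (rule sum.cong[OF refl])
        fix i assume "i \<in> {..<?n}"
        hence i: "i < ?n" by simp
        have "kos_h scale ?n i (kos_d scale y c) J = 0" unfolding dc kos_h_def by simp
        thus "scale (b i) (kos_d scale y (kos_h scale ?n i c) J) = scale (b i) (scale (y!i) (c J))"
          using kos_homotopy[OF i, of c J] cvan by auto
      qed
      also have "\<dots> = scale (\<Sum>i<?n. y!i * b i) (c J)"
        by (simp add: scale_sum_left mult.commute)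
      also have "\<dots> = c J"
        using b[of "c J"] by (simp add: scale_left_diff_distrib)
      finally show "kos_d scale y e J = c J" .
    qed
    ultimately show "\<exists>e\<in>kos_chains ?n (Suc p). kos_d scale y e = c" by blast
  qed
qed

end

context Modules.module
begin

lemma max_submodule:
  assumes F: "finite F" "span F = UNIV" and N0: "subspace N0" "N0 \<noteq> UNIV"
  shows "\<exists>P. subspace P \<and> N0 \<subseteq> P \<and> P \<noteq> UNIV \<and> (\<forall>Q. subspace Q \<longrightarrow> P \<subseteq> Q \<longrightarrow> Q \<noteq> UNIV \<longrightarrow> Q = P)"
proof -
  define \<A> where "\<A> = {P. subspace P \<and> N0 \<subseteq> P \<and> P \<noteq> UNIV}"
  have ne: "\<A> \<noteq> {}" using N0 unfolding \<A>_def by auto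
  have "\<exists>M\<in>\<A>. \<forall>X1\<in>\<A>. M \<subseteq> X1 \<longrightarrow> X1 = M"
  proof (rule subset_Zorn_nonempty[OF ne])
    fix \<C> assume C: "\<C> \<noteq> {}" "subset.chain \<A> \<C>"
    have CA: "\<C> \<subseteq> \<A>" and ch: "\<And>X1 Y. X1 \<in> \<C> \<Longrightarrow> Y \<in> \<C> \<Longrightarrow> X1 \<subseteq> Y \<or> Y \<subseteq> X1"
      using C(2) unfolding subset_chain_def by auto
    have sub: "\<And>X1. X1 \<in> \<C> \<Longrightarrow> subspace X1" using CA unfolding \<A>_def by auto
    have "subspace (\<Union>\<C>)"
    proof (rule subspaceI)
      obtain X1 where "X1 \<in> \<C>" using C(1) by auto
      thus "0 \<in> \<Union>\<C>" using sub subspace_0 by blast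
    next
      fix x y assume "x \<in> \<Union>\<C>" "y \<in> \<Union>\<C>"
      then obtain X1 Y where XY: "X1 \<in> \<C>" "Y \<in> \<C>" "x \<in> X1" "y \<in> Y" by auto
      show "x + y \<in> \<Union>\<C>"
      proof (cases "X1 \<subseteq> Y")
        case True thus ?thesis using XY sub subspace_add by blast
      next
        case False hence "Y \<subseteq> X1" using ch XY by blast
        thus ?thesis using XY sub subspace_add by blast
      qed
    next
      fix c x assume "x \<in> \<Union>\<C>"
      then obtain X1 where "X1 \<in> \<C>" "x \<in> X1" by auto
      thus "scale c x \<in> \<Union>\<C>" using sub subspace_scale by blast
    qed
    moreover have "N0 \<subseteq> \<Union>\<C>" using C(1) CA unfolding \<A>_def by auto
    moreover have "\<Union>\<C> \<noteq> UNIV"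
    proof
      assume U: "\<Union>\<C> = UNIV"
      obtain B where B: "B \<in> \<C>" "F \<subseteq> B"
        using finite_subset_Union_chain[OF F(1) _ C(1) C(2)] U by auto
      have "span F \<subseteq> B" using span_minimal[OF B(2) sub[OF B(1)]] .
      thus False using F(2) B CA unfolding \<A>_def by auto
    qed
    ultimately show "\<Union>\<C> \<in> \<A>" unfolding \<A>_def by auto
  qed
  then obtain P where P: "P \<in> \<A>" "\<And>X1. X1 \<in> \<A> \<Longrightarrow> P \<subseteq> X1 \<Longrightarrow> X1 = P" by auto
  thus ?thesis unfolding \<A>_def by blast
qed

lemma max_ideal_from_submodule:
  assumes P: "subspace P" "P \<noteq> UNIV"
    and Pmax: "\<And>Q. subspace Q \<Longrightarrow> P \<subseteq> Q \<Longrightarrow> Q \<noteq> UNIV \<Longrightarrow> Q = P"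
  obtains u0 where "u0 \<notin> P"
    and "0 \<in> {r. scale r u0 \<in> P}"
    and "\<And>a b. scale a u0 \<in> P \<Longrightarrow> scale b u0 \<in> P \<Longrightarrow> scale (a + b) u0 \<in> P"
    and "\<And>a r. scale a u0 \<in> P \<Longrightarrow> scale (r * a) u0 \<in> P"
    and "\<And>r. scale r u0 \<notin> P \<Longrightarrow> \<exists>s. scale (1 - s * r) u0 \<in> P"
    and "\<And>r v. scale r u0 \<in> P \<Longrightarrow> scale r v \<in> P"
proof -
  obtain u0 where u0: "u0 \<notin> P" using P(2) by auto
  have ext: "\<And>w. w \<notin> P \<Longrightarrow> \<forall>v. \<exists>p\<in>P. \<exists>s. v = p + scale s w"
  proof -
    fix w assume w: "w \<notin> P"
    define Q where "Q = {p + scale s w | p s. p \<in> P}"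
    have "subspace Q" unfolding Q_def
    proof (rule subspaceI)
      show "0 \<in> {p + scale s w |p s. p \<in> P}" using subspace_0[OF P(1)] by (auto intro!: exI[of _ 0])
    next
      fix x y assume "x \<in> {p + scale s w |p s. p \<in> P}" "y \<in> {p + scale s w |p s. p \<in> P}"
      then obtain p1 s1 p2 s2 where "x = p1 + scale s1 w" "y = p2 + scale s2 w" "p1 \<in> P" "p2 \<in> P" by auto
      moreover have "x + y = (p1 + p2) + scale (s1 + s2) w" using calculation by (simp add: scale_left_distrib algebra_simps)
      ultimately show "x + y \<in> {p + scale s w |p s. p \<in> P}" using subspace_add[OF P(1)] by blast
    next
      fix c x assume "x \<in> {p + scale s w |p s. p \<in> P}"
      then obtain p s where "x = p + scale s w" "p \<in> P" by auto
      moreover have "scale c x = scale c p + scale (c * s) w" using calculation by (simp add: scale_right_distrib)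
      ultimately show "scale c x \<in> {p + scale s w |p s. p \<in> P}" using subspace_scale[OF P(1)] by blast
    qed
    moreover have "P \<subseteq> Q" unfolding Q_def by (force intro: exI[of _ 0])
    moreover have "w \<in> Q" unfolding Q_def by (force intro: exI[of _ 0] exI[of _ 1] subspace_0[OF P(1)])
    ultimately have "Q = UNIV" using Pmax w by blast
    thus "\<forall>v. \<exists>p\<in>P. \<exists>s. v = p + scale s w" unfolding Q_def by blast
  qed
  show ?thesis
  proof (rule that[OF u0])
    show "0 \<in> {r. scale r u0 \<in> P}" using subspace_0[OF P(1)] by simp
    show "\<And>a b. scale a u0 \<in> P \<Longrightarrow> scale b u0 \<in> P \<Longrightarrow> scale (a + b) u0 \<in> P"
      using subspace_add[OF P(1)] by (simp add: scale_left_distrib)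
    show "\<And>a r. scale a u0 \<in> P \<Longrightarrow> scale (r * a) u0 \<in> P"
      using subspace_scale[OF P(1)] by (metis scale_scale)
    show "\<exists>s. scale (1 - s * r) u0 \<in> P" if r: "scale r u0 \<notin> P" for r
    proof -
      obtain p s where ps: "p \<in> P" "u0 = p + scale s (scale r u0)" using ext[OF r] by blast
      have "scale (1 - s * r) u0 = p" using ps(2) by (simp add: scale_left_diff_distrib algebra_simps)
      thus ?thesis using ps(1) by blast
    qed
    show "scale r v \<in> P" if r: "scale r u0 \<in> P" for r v
    proof -
      obtain p s where ps: "p \<in> P" "v = p + scale s u0" using ext[OF u0] by blast
      have "scale r v = scale r p + scale s (scale r u0)"
        using ps(2) by (simp add: scale_right_distrib mult.commute)
      thus ?thesis using ps(1) r subspace_add[OF P(1)] subspace_scale[OF P(1)] by metis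
    qed
  qed
qed

end

lemma ideal_cong_sum:
  fixes I :: "'r::comm_ring_1 set"
  assumes I0: "0 \<in> I" and Iadd: "\<And>a b. a \<in> I \<Longrightarrow> b \<in> I \<Longrightarrow> a + b \<in> I"
    and fg: "\<And>i. i \<in> A \<Longrightarrow> f i - g i \<in> I"
  shows "sum f A - sum g A \<in> I"
proof (cases "finite A")
  case True
  then show ?thesis using fg
  proof (induction A rule: finite_induct)
    case empty then show ?case using I0 by simp
  next
    case (insert a A)
    have e: "sum f (insert a A) - sum g (insert a A) = (f a - g a) + (sum f A - sum g A)"
      using insert by (simp add: algebra_simps)
    show ?case unfolding e using insert by (intro Iadd) auto
  qed
next
  case False then show ?thesis using I0 by simp
qed

lemma ideal_cong_prod:
  fixes I :: "'r::comm_ring_1 set"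
  assumes I0: "0 \<in> I" and Iadd: "\<And>a b. a \<in> I \<Longrightarrow> b \<in> I \<Longrightarrow> a + b \<in> I"
    and Imul: "\<And>a r. a \<in> I \<Longrightarrow> r * a \<in> I"
    and fg: "\<And>i. i \<in> A \<Longrightarrow> f i - g i \<in> I"
  shows "prod f A - prod g A \<in> I"
proof (cases "finite A")
  case True
  then show ?thesis using fg
  proof (induction A rule: finite_induct)
    case empty then show ?case using I0 by simp
  next
    case (insert a A)
    have e: "prod f (insert a A) - prod g (insert a A) = f a * (prod f A - prod g A) + prod g A * (f a - g a)"
      using insert by (simp add: algebra_simps)
    show ?case unfolding e using insert by (intro Iadd Imul) auto
  qed
next
  case False then show ?thesis using I0 by simp
qed

lemma ideal_cong_pow:
  fixes I :: "'r::comm_ring_1 set"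
  assumes I0: "0 \<in> I" and Iadd: "\<And>a b. a \<in> I \<Longrightarrow> b \<in> I \<Longrightarrow> a + b \<in> I"
    and Imul: "\<And>a r. a \<in> I \<Longrightarrow> r * a \<in> I"
    and fg: "f - g \<in> I"
  shows "f ^ n - g ^ n \<in> I"
  using ideal_cong_prod[OF I0 Iadd Imul, of "{..<n}" "\<lambda>_. f" "\<lambda>_. g"] fg by simp

lemma alg_map_props:
  assumes "alg_map \<phi>"
  shows "\<phi> 1 = 1" "\<phi> (a + b) = \<phi> a + \<phi> b" "\<phi> (a * b) = \<phi> a * \<phi> b" "\<phi> 0 = 0"
    "\<phi> (a - b) = \<phi> a - \<phi> b"
proof -
  show p1: "\<phi> 1 = 1" and padd: "\<phi> (a + b) = \<phi> a + \<phi> b" and "\<phi> (a * b) = \<phi> a * \<phi> b"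
    using assms unfolding alg_map_def by auto
  have padd': "\<And>a b. \<phi> (a + b) = \<phi> a + \<phi> b" using assms unfolding alg_map_def by auto
  show p0: "\<phi> 0 = 0" using padd'[of 0 0] by simp
  have "\<phi> (a - b) + \<phi> b = \<phi> a" using padd'[of "a - b" b] by simp
  thus "\<phi> (a - b) = \<phi> a - \<phi> b" by (simp add: eq_diff_eq)
qed

lemma alg_map_sum: "alg_map \<phi> \<Longrightarrow> \<phi> (sum f A) = (\<Sum>x\<in>A. \<phi> (f x))"
  by (induction A rule: infinite_finite_induct) (auto simp: alg_map_props)

lemma alg_map_prod: "alg_map \<phi> \<Longrightarrow> \<phi> (prod f A) = (\<Prod>x\<in>A. \<phi> (f x))"
  by (induction A rule: infinite_finite_induct) (auto simp: alg_map_props)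

lemma alg_map_pow: "alg_map \<phi> \<Longrightarrow> \<phi> (a ^ n) = \<phi> a ^ n"
  by (induction n) (auto simp: alg_map_props)

lemma mpoly_cong:
  fixes \<phi> :: "'k::field \<Rightarrow> 'r::comm_ring_1" and I :: "'r set"
  assumes phi: "alg_map \<phi>"
    and I0: "0 \<in> I" and Iadd: "\<And>a b. a \<in> I \<Longrightarrow> b \<in> I \<Longrightarrow> a + b \<in> I"
    and Imul: "\<And>a r. a \<in> I \<Longrightarrow> r * a \<in> I"
    and vars: "mpoly_vars p \<subseteq> {..<length x}"
    and xa: "\<And>i. i < length x \<Longrightarrow> x ! i - \<phi> (a ! i) \<in> I"
  shows "mpoly_eval \<phi> x p - \<phi> (mpoly_eval (\<lambda>c. c) a p) \<in> I"
proof -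
  have "\<phi> (mpoly_eval (\<lambda>c. c) a p)
      = (\<Sum>mon\<in>Poly_Mapping.keys p. \<phi> (Poly_Mapping.lookup p mon) *
           (\<Prod>i\<in>Poly_Mapping.keys mon. \<phi> (a ! i) ^ Poly_Mapping.lookup mon i))"
    unfolding mpoly_eval_def using phi
    by (simp add: alg_map_sum alg_map_prod alg_map_pow alg_map_props)
  moreover have "mpoly_eval \<phi> x p - \<dots> \<in> I"
    unfolding mpoly_eval_def
  proof (rule ideal_cong_sum[OF I0 Iadd])
    fix mon assume mon: "mon \<in> Poly_Mapping.keys p"
    have "(\<Prod>i\<in>Poly_Mapping.keys mon. x ! i ^ Poly_Mapping.lookup mon i)
        - (\<Prod>i\<in>Poly_Mapping.keys mon. \<phi> (a ! i) ^ Poly_Mapping.lookup mon i) \<in> I"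
    proof (rule ideal_cong_prod[OF I0 Iadd Imul])
      fix i assume "i \<in> Poly_Mapping.keys mon"
      hence "i < length x" using vars mon unfolding mpoly_vars_def by auto
      thus "x ! i ^ Poly_Mapping.lookup mon i - \<phi> (a ! i) ^ Poly_Mapping.lookup mon i \<in> I"
        using ideal_cong_pow[OF I0 Iadd Imul xa] by blast
    qed
    hence "\<phi> (Poly_Mapping.lookup p mon) * ((\<Prod>i\<in>Poly_Mapping.keys mon. x ! i ^ Poly_Mapping.lookup mon i)
        - (\<Prod>i\<in>Poly_Mapping.keys mon. \<phi> (a ! i) ^ Poly_Mapping.lookup mon i)) \<in> I"
      using Imul by blast
    thus "\<phi> (Poly_Mapping.lookup p mon) * (\<Prod>i\<in>Poly_Mapping.keys mon. x ! i ^ Poly_Mapping.lookup mon i)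
        - \<phi> (Poly_Mapping.lookup p mon) * (\<Prod>i\<in>Poly_Mapping.keys mon. \<phi> (a ! i) ^ Poly_Mapping.lookup mon i) \<in> I"
      by (simp add: right_diff_distrib)
  qed
  ultimately show ?thesis by simp
qed


hide_const (open) Module.module

theorem theorem2p13:
  fixes \<phi> :: "'k::alg_closed_field \<Rightarrow> 'r::comm_ring_1"
    and smul :: "'r \<Rightarrow> 'm::ab_group_add \<Rightarrow> 'm"
    and x :: "'r list"
    and q :: "'k mpoly list"
  assumes "alg_map \<phi>"
    and "fin_gen_algebra \<phi>"
    and "module smul"
    and "noetherian_module smul"
    and "\<forall>p\<in>set q. mpoly_vars p \<subseteq> {..<length x}"
  shows "taylor_spectrum \<phi> smul (map (mpoly_eval \<phi> x) q) =
         (\<lambda>a. map (mpoly_eval (\<lambda>c. c) a) q) ` taylor_spectrum \<phi> smul x"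
proof -
  note phi = assms(1) and fg = assms(2) and vars = assms(5)
  interpret Mo: Modules.module smul by (rule assms(3))
  obtain F where F: "finite F" "Mo.span F = UNIV"
    using assms(4) Mo.subspace_UNIV unfolding noetherian_module_def by blast
  define good where "good = (\<lambda>y. \<forall>u. \<exists>w. u = (\<Sum>i<length y. smul (y!i) (w i)))"
  have exi: "\<And>y. kos_exact smul y \<longleftrightarrow> good y" unfolding good_def using Mo.kos_exact_iff[OF F] by blast
  define n where "n = length x"
  define mq where "mq = length q"
  define z where "z = (\<lambda>b. map2 (\<lambda>yi ai. yi - \<phi> ai) (map (mpoly_eval \<phi> x) q) b)"
  define wa where "wa = (\<lambda>a. map2 (\<lambda>yi ai. yi - \<phi> ai) x a)"
  have zlen: "\<And>b. length b = mq \<Longrightarrow> length (z b) = mq" unfolding z_def mq_def by simp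
  have znth: "\<And>b j. length b = mq \<Longrightarrow> j < mq \<Longrightarrow> z b ! j = mpoly_eval \<phi> x (q!j) - \<phi> (b!j)"
    unfolding z_def mq_def by simp
  have walen: "\<And>a. length a = n \<Longrightarrow> length (wa a) = n" unfolding wa_def n_def by simp
  have wanth: "\<And>a i. length a = n \<Longrightarrow> i < n \<Longrightarrow> wa a ! i = x ! i - \<phi> (a!i)"
    unfolding wa_def n_def by simp
  have LHS: "taylor_spectrum \<phi> smul (map (mpoly_eval \<phi> x) q) = {b. length b = mq \<and> \<not> good (z b)}"
    unfolding taylor_spectrum_def z_def mq_def using exi by auto
  have RHS: "taylor_spectrum \<phi> smul x = {a. length a = n \<and> \<not> good (wa a)}"
    unfolding taylor_spectrum_def wa_def n_def using exi by auto
  show ?thesis unfolding LHS RHS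
  proof (intro equalityI subsetI)
    fix b assume "b \<in> {b. length b = mq \<and> \<not> good (z b)}"
    hence lb: "length b = mq" and ng: "\<not> good (z b)" by auto
    define zb where "zb = z b"
    have lzb: "length zb = mq" using zlen[OF lb] unfolding zb_def .
    define N0 where "N0 = {(\<Sum>j<mq. smul (zb!j) (w j)) | w. True}"
    have N0s: "Mo.subspace N0" unfolding N0_def
    proof (rule Mo.subspaceI)
      show "0 \<in> {\<Sum>j<mq. smul (zb ! j) (w j) |w. True}" by (auto intro!: exI[of _ "\<lambda>_. 0"])
    next
      fix u v assume "u \<in> {\<Sum>j<mq. smul (zb ! j) (w j) |w. True}" "v \<in> {\<Sum>j<mq. smul (zb ! j) (w j) |w. True}"
      then obtain w1 w2 where "u = (\<Sum>j<mq. smul (zb ! j) (w1 j))" "v = (\<Sum>j<mq. smul (zb ! j) (w2 j))" by auto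
      hence "u + v = (\<Sum>j<mq. smul (zb ! j) (w1 j + w2 j))" by (simp add: sum.distrib Mo.scale_right_distrib)
      thus "u + v \<in> {\<Sum>j<mq. smul (zb ! j) (w j) |w. True}"
        by (intro CollectI exI[of _ "\<lambda>j. w1 j + w2 j"]) simp
    next
      fix c u assume "u \<in> {\<Sum>j<mq. smul (zb ! j) (w j) |w. True}"
      then obtain w1 where "u = (\<Sum>j<mq. smul (zb ! j) (w1 j))" by auto
      hence "smul c u = (\<Sum>j<mq. smul (zb ! j) (smul c (w1 j)))" by (simp add: Mo.scale_sum_right mult.commute)
      thus "smul c u \<in> {\<Sum>j<mq. smul (zb ! j) (w j) |w. True}"
        by (intro CollectI exI[of _ "\<lambda>j. smul c (w1 j)"]) simp
    qed
    have N0U: "N0 \<noteq> UNIV" using ng unfolding good_def N0_def zb_def[symmetric] lzb by blast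
    obtain P where P: "Mo.subspace P" "N0 \<subseteq> P" "P \<noteq> UNIV"
      "\<And>Q. Mo.subspace Q \<Longrightarrow> P \<subseteq> Q \<Longrightarrow> Q \<noteq> UNIV \<Longrightarrow> Q = P"
      using Mo.max_submodule[OF F N0s N0U] by blast
    obtain u0 where u0: "u0 \<notin> P"
      and m0: "0 \<in> {r. smul r u0 \<in> P}"
      and madd: "\<And>a b. smul a u0 \<in> P \<Longrightarrow> smul b u0 \<in> P \<Longrightarrow> smul (a + b) u0 \<in> P"
      and mmul: "\<And>a r. smul a u0 \<in> P \<Longrightarrow> smul (r * a) u0 \<in> P"
      and mmax: "\<And>r. smul r u0 \<notin> P \<Longrightarrow> \<exists>s. smul (1 - s * r) u0 \<in> P"
      and mall: "\<And>r v. smul r u0 \<in> P \<Longrightarrow> smul r v \<in> P"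
      using Mo.max_ideal_from_submodule[OF P(1) P(3) P(4)] by blast
    define m where "m = {r. smul r u0 \<in> P}"
    have m1: "1 \<notin> m" unfolding m_def using u0 by simp
    have zar: "\<And>t. \<exists>c. t - \<phi> c \<in> m"
      using zariski_tc[OF phi fg, of m] m0 madd mmul m1 mmax unfolding m_def by blast
    define a where "a = map (\<lambda>i. SOME c. x ! i - \<phi> c \<in> m) [0..<n]"
    have la: "length a = n" unfolding a_def by simp
    have xa: "\<And>i. i < length x \<Longrightarrow> x ! i - \<phi> (a ! i) \<in> m"
      unfolding a_def n_def using zar by (auto intro: someI_ex)
    have Iadd: "\<And>a b. a \<in> m \<Longrightarrow> b \<in> m \<Longrightarrow> a + b \<in> m" using madd unfolding m_def by blast
    have Imul: "\<And>a r. a \<in> m \<Longrightarrow> r * a \<in> m" using mmul unfolding m_def by blast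
    have I0: "0 \<in> m" using m0 unfolding m_def .
    have zm: "zb ! j \<in> m" if j: "j < mq" for j
    proof -
      have "(\<Sum>j'<mq. smul (zb ! j') (if j' = j then u0 else 0)) = smul (zb ! j) u0"
        using j by (simp add: if_distrib[of "smul _"] sum.delta cong: if_cong)
      hence "smul (zb ! j) u0 \<in> N0" unfolding N0_def
        by (intro CollectI exI[of _ "\<lambda>j'. if j' = j then u0 else 0"]) simp
      thus ?thesis using P(2) unfolding m_def by auto
    qed
    have bq: "b = map (mpoly_eval (\<lambda>c. c) a) q"
    proof (rule nth_equalityI)
      show "length b = length (map (mpoly_eval (\<lambda>c. c) a) q)" using lb mq_def by simp
    next
      fix j assume "j < length b"
      hence j: "j < mq" using lb by simp
      have c1: "mpoly_eval \<phi> x (q!j) - \<phi> (mpoly_eval (\<lambda>c. c) a (q!j)) \<in> m"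
        using mpoly_cong[OF phi I0 Iadd Imul _ xa] vars j unfolding mq_def by auto
      have c2: "mpoly_eval \<phi> x (q!j) - \<phi> (b!j) \<in> m" using zm[OF j] znth[OF lb j] unfolding zb_def by simp
      have "\<phi> (mpoly_eval (\<lambda>c. c) a (q!j) - b!j) \<in> m"
      proof -
        have "(mpoly_eval \<phi> x (q!j) - \<phi> (b!j)) + (-1) * (mpoly_eval \<phi> x (q!j) - \<phi> (mpoly_eval (\<lambda>c. c) a (q!j))) \<in> m"
          using Iadd[OF c2 Imul[OF c1]] .
        hence "\<phi> (mpoly_eval (\<lambda>c. c) a (q!j)) - \<phi> (b!j) \<in> m" by (simp add: algebra_simps)
        thus ?thesis by (simp only: alg_map_props(5)[OF phi])
      qed
      moreover have "d \<noteq> 0 \<Longrightarrow> \<phi> d \<in> m \<Longrightarrow> False" for d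
      proof -
        assume "d \<noteq> 0" "\<phi> d \<in> m"
        hence "\<phi> (inverse d) * \<phi> d \<in> m" using Imul by blast
        moreover have "\<phi> (inverse d) * \<phi> d = \<phi> (inverse d * d)" using alg_map_props(3)[OF phi] by simp
        moreover have "inverse d * d = 1" using \<open>d \<noteq> 0\<close> by simp
        ultimately have "1 \<in> m" using alg_map_props(1)[OF phi] by simp
        thus False using m1 by simp
      qed
      ultimately have "mpoly_eval (\<lambda>c. c) a (q!j) - b!j = 0" by blast
      hence "mpoly_eval (\<lambda>c. c) a (q!j) = b!j" by simp
      thus "b ! j = map (mpoly_eval (\<lambda>c. c) a) q ! j" using j mq_def by simp
    qed
    have "\<not> good (wa a)"
    proof
      assume "good (wa a)"
      then obtain w where w: "u0 = (\<Sum>i<length (wa a). smul (wa a ! i) (w i))" unfolding good_def by blast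
      have "(\<Sum>i<length (wa a). smul (wa a ! i) (w i)) \<in> P"
      proof (rule Mo.subspace_sum[OF P(1)])
        fix i assume "i \<in> {..<length (wa a)}"
        hence i: "i < n" using walen[OF la] by simp
        have "wa a ! i \<in> m" using wanth[OF la i] xa i unfolding n_def by simp
        thus "smul (wa a ! i) (w i) \<in> P" using mall unfolding m_def by blast
      qed
      thus False using w u0 by simp
    qed
    thus "b \<in> (\<lambda>a. map (mpoly_eval (\<lambda>c. c) a) q) ` {a. length a = n \<and> \<not> good (wa a)}"
      using bq la by blast
  next
    fix b assume "b \<in> (\<lambda>a. map (mpoly_eval (\<lambda>c. c) a) q) ` {a. length a = n \<and> \<not> good (wa a)}"
    then obtain a where la: "length a = n" and ng: "\<not> good (wa a)" and bq: "b = map (mpoly_eval (\<lambda>c. c) a) q"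
      by auto
    have lb: "length b = mq" using bq mq_def by simp
    define I where "I = {(\<Sum>i<n. (x ! i - \<phi> (a ! i)) * r i) | r. True}"
    have I0: "0 \<in> I" unfolding I_def by (auto intro!: exI[of _ "\<lambda>_. 0"])
    have Iadd: "\<And>u v. u \<in> I \<Longrightarrow> v \<in> I \<Longrightarrow> u + v \<in> I"
    proof -
      fix u v assume "u \<in> I" "v \<in> I"
      then obtain r1 r2 where "u = (\<Sum>i<n. (x ! i - \<phi> (a ! i)) * r1 i)" "v = (\<Sum>i<n. (x ! i - \<phi> (a ! i)) * r2 i)"
        unfolding I_def by auto
      hence "u + v = (\<Sum>i<n. (x ! i - \<phi> (a ! i)) * (r1 i + r2 i))" by (simp add: sum.distrib distrib_left)
      thus "u + v \<in> I" unfolding I_def by (intro CollectI exI[of _ "\<lambda>i. r1 i + r2 i"]) simp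
    qed
    have Imul: "\<And>u r. u \<in> I \<Longrightarrow> r * u \<in> I"
    proof -
      fix u r assume "u \<in> I"
      then obtain r1 where "u = (\<Sum>i<n. (x ! i - \<phi> (a ! i)) * r1 i)" unfolding I_def by auto
      hence "r * u = (\<Sum>i<n. (x ! i - \<phi> (a ! i)) * (r * r1 i))" by (simp add: sum_distrib_left algebra_simps)
      thus "r * u \<in> I" unfolding I_def by (intro CollectI exI[of _ "\<lambda>i. r * r1 i"]) simp
    qed
    have xa: "\<And>i. i < length x \<Longrightarrow> x ! i - \<phi> (a ! i) \<in> I"
    proof -
      fix i assume i: "i < length x"
      have "(\<Sum>i'<n. (x ! i' - \<phi> (a ! i')) * (if i' = i then 1 else 0)) = x ! i - \<phi> (a ! i)"
        using i unfolding n_def by (simp add: if_distrib[of "\<lambda>t. _ * t"] sum.delta cong: if_cong)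
      thus "x ! i - \<phi> (a ! i) \<in> I" unfolding I_def
        by (intro CollectI exI[of _ "\<lambda>i'. if i' = i then 1 else 0"]) simp
    qed
    have "\<not> good (z b)"
    proof
      assume gz: "good (z b)"
      have "\<forall>j. \<exists>r. j < mq \<longrightarrow> z b ! j = (\<Sum>i<n. (x ! i - \<phi> (a ! i)) * r i)"
      proof (intro allI)
        fix j show "\<exists>r. j < mq \<longrightarrow> z b ! j = (\<Sum>i<n. (x ! i - \<phi> (a ! i)) * r i)"
        proof (cases "j < mq")
          case True
          have "mpoly_eval \<phi> x (q!j) - \<phi> (mpoly_eval (\<lambda>c. c) a (q!j)) \<in> I"
            using mpoly_cong[OF phi I0 Iadd Imul _ xa] vars True unfolding mq_def by auto
          moreover have "z b ! j = mpoly_eval \<phi> x (q!j) - \<phi> (mpoly_eval (\<lambda>c. c) a (q!j))"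
            using znth[OF lb True] bq True mq_def by simp
          ultimately show ?thesis unfolding I_def by auto
        qed simp
      qed
      then obtain r where r: "\<And>j. j < mq \<Longrightarrow> z b ! j = (\<Sum>i<n. (x ! i - \<phi> (a ! i)) * r j i)" by metis
      have "good (wa a)" unfolding good_def
      proof
        fix u
        obtain w where w: "u = (\<Sum>j<length (z b). smul (z b ! j) (w j))" using gz unfolding good_def by blast
        have "u = (\<Sum>j<mq. \<Sum>i<n. smul (x ! i - \<phi> (a ! i)) (smul (r j i) (w j)))"
          unfolding w zlen[OF lb] using r by (simp add: Mo.scale_sum_left)
        also have "\<dots> = (\<Sum>i<n. smul (wa a ! i) (\<Sum>j<mq. smul (r j i) (w j)))"
          by (subst sum.swap) (simp add: wanth[OF la] Mo.scale_sum_right)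
        finally show "\<exists>w. u = (\<Sum>i<length (wa a). smul (wa a ! i) (w i))"
          using walen[OF la] by auto
      qed
      thus False using ng by simp
    qed
    thus "b \<in> {b. length b = mq \<and> \<not> good (z b)}" using lb by simp
  qed
qed

end
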